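(* Let $z_0=0,z_1,\dots,z_s$ be distinct points of $\mathbb{D}$, let $d_0\ge0$ and $m_1,\dots,m_s\ge1$ be integers, and let $b(z)=z^{d_0}\prod_{j=1}^s\Big(\frac{z-z_j}{1-\overline{z_j}z}\Big)^{m_j}$. Let $B=f_0+f_1+\dots+f_s$ be $\mathcal{H}^2_{\omega}$-inner, where $f_0$ is a polynomial of degree $d_0$ and $f_j\in\mathcal{X}_{z_j}$ has degree $m_j-1$ for $1\le j\le s$ (an $\mathcal{H}^2_{\omega}$-analogue of $b$). Then $B/b$ (extended holomorphically across the zeros of $b$) belongs to $\mathcal{H}^2_{\omega}(|b|^2)$ and is a constant multiple of the reproducing kernel of $\mathcal{H}^2_{\omega}(|b|^2)$ at the origin.
   Context: Let $\omega=\{\omega_n\}_{n\geq 0}$ be a sequence of positive reals with $\omega_0=1$ and $\lim_{n\to\infty}\omega_{n+1}/\omega_n=1$. $\mathcal{H}^2_{\omega}$ is the Hilbert space of power series $f(z)=\sum_{n\ge0}a_nz^n$ with $\|f\|^2=\sum_{n\geq0}\omega_n|a_n|^2<\infty$ and inner product $\langle f,g\rangle=\sum_n\omega_na_n\overline{b_n}$; it is a reproducing kernel Hilbert space on the unit disk $\mathbb{D}$ with kernel $K_\lambda(z)=\sum_{n\ge0}\overline{\lambda}^nz^n/\omega_n$. For $\ell\ge0$, $K^{(\ell)}_\lambda(z)=\frac{\partial^\ell}{\partial\overline{\lambda}^\ell}K_\lambda(z)$; $\mathcal{X}_\lambda$ is the linear span of $\{K_\lambda,K^{(1)}_\lambda,\dots\}$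 and for $f=\sum_{j=0}^mc_jK^{(j)}_\lambda$ with $c_m\ne0$ the degree of $f$ is $m$. For a nonzero $b\in\mathcal{H}^2_{\omega}$, $\mathcal{H}^2_{\omega}(|b|^2)$ is the completion of the holomorphic polynomials under the norm $\|f\|_{\mathcal{H}^2_{\omega}(|b|^2)}=\|fb\|_{\mathcal{H}^2_{\omega}}$ (inner product $\langle f,g\rangle_{\mathcal{H}^2_{\omega}(|b|^2)}=\langle fb,gb\rangle_{\mathcal{H}^2_{\omega}}$); it is a reproducing kernel Hilbert space of holomorphic functions on $\mathbb{D}$. A function $f$ is $\mathcal{H}^2_{\omega}$-inner if $\|f\|=1$ and $\langle z^mf,f\rangle=0$ for all integers $m\geq1$. *)

theory Defs
  imports "HOL-Complex_Analysis.Complex_Analysis" "HOL-Computational_Algebra.Polynomial"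
begin

definition admissible_weight :: "(nat \<Rightarrow> real) \<Rightarrow> bool" where
  "admissible_weight \<omega> \<longleftrightarrow> (\<forall>n. \<omega> n > 0) \<and> \<omega> 0 = 1 \<and>
     ((\<lambda>n. \<omega> (Suc n) / \<omega> n) \<longlonglongrightarrow> 1)"

definition tcoef :: "(complex \<Rightarrow> complex) \<Rightarrow> nat \<Rightarrow> complex" where
  "tcoef f n = (deriv ^^ n) f 0 / fact n"

definition in_H2 :: "(nat \<Rightarrow> real) \<Rightarrow> (complex \<Rightarrow> complex) \<Rightarrow> bool" where
  "in_H2 \<omega> f \<longleftrightarrow> f holomorphic_on ball 0 1 \<and>
     summable (\<lambda>n. \<omega> n * (cmod (tcoef f n))\<^sup>2)"

definition H2_inner :: "(nat \<Rightarrow> real) \<Rightarrow> (complex \<Rightarrow> complex) \<Rightarrow> (complex \<Rightarrow> complex) \<Rightarrow> complex" where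
  "H2_inner \<omega> f g = (\<Sum>n. of_real (\<omega> n) * tcoef f n * cnj (tcoef g n))"

definition H2_norm :: "(nat \<Rightarrow> real) \<Rightarrow> (complex \<Rightarrow> complex) \<Rightarrow> real" where
  "H2_norm \<omega> f = sqrt (\<Sum>n. \<omega> n * (cmod (tcoef f n))\<^sup>2)"

definition H2_inner_fun :: "(nat \<Rightarrow> real) \<Rightarrow> (complex \<Rightarrow> complex) \<Rightarrow> bool" where
  "H2_inner_fun \<omega> f \<longleftrightarrow> in_H2 \<omega> f \<and> H2_norm \<omega> f = 1 \<and>
     (\<forall>m::nat. m \<ge> 1 \<longrightarrow> H2_inner \<omega> (\<lambda>z. z ^ m * f z) f = 0)"

text \<open>K^{(l)}_lambda(z) = d^l/d(conj lambda)^l of sum_n conj(lambda)^n z^n / omega_n,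
  differentiated termwise.\<close>
definition Kder :: "(nat \<Rightarrow> real) \<Rightarrow> complex \<Rightarrow> nat \<Rightarrow> complex \<Rightarrow> complex" where
  "Kder \<omega> lam l z = (\<Sum>n. if l \<le> n then
       fact n / fact (n - l) * cnj lam ^ (n - l) * z ^ n / of_real (\<omega> n) else 0)"

definition in_X_deg :: "(nat \<Rightarrow> real) \<Rightarrow> complex \<Rightarrow> (complex \<Rightarrow> complex) \<Rightarrow> nat \<Rightarrow> bool" where
  "in_X_deg \<omega> lam f d \<longleftrightarrow> (\<exists>c::nat \<Rightarrow> complex. c d \<noteq> 0 \<and>
      (\<forall>z. f z = (\<Sum>j\<le>d. c j * Kder \<omega> lam j z)))"

text \<open>H^2_omega(|b|^2): the completion of the polynomials under f \<mapsto> ||f b||, realised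
  as the holomorphic functions F on the disc such that F b is the H^2_omega-limit of
  p_k b for some sequence of polynomials p_k.\<close>
definition in_Hb :: "(nat \<Rightarrow> real) \<Rightarrow> (complex \<Rightarrow> complex) \<Rightarrow> (complex \<Rightarrow> complex) \<Rightarrow> bool" where
  "in_Hb \<omega> b F \<longleftrightarrow> F holomorphic_on ball 0 1 \<and> in_H2 \<omega> (\<lambda>z. F z * b z) \<and>
     (\<exists>p :: nat \<Rightarrow> complex poly.
        (\<forall>k. in_H2 \<omega> (\<lambda>z. poly (p k) z * b z - F z * b z)) \<and>
        ((\<lambda>k. H2_norm \<omega> (\<lambda>z. poly (p k) z * b z - F z * b z)) \<longlonglongrightarrow> 0))"

definition Hb_inner :: "(nat \<Rightarrow> real) \<Rightarrow> (complex \<Rightarrow> complex) \<Rightarrow> (complex \<Rightarrow> complex) \<Rightarrow> (complex \<Rightarrow> complex) \<Rightarrow> complex" where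
  "Hb_inner \<omega> b F G = H2_inner \<omega> (\<lambda>z. F z * b z) (\<lambda>z. G z * b z)"

definition is_Hb_kernel :: "(nat \<Rightarrow> real) \<Rightarrow> (complex \<Rightarrow> complex) \<Rightarrow> complex \<Rightarrow> (complex \<Rightarrow> complex) \<Rightarrow> bool" where
  "is_Hb_kernel \<omega> b w k \<longleftrightarrow> in_Hb \<omega> b k \<and> (\<forall>G. in_Hb \<omega> b G \<longrightarrow> Hb_inner \<omega> b G k = G w)"

end

theory Submission
  imports Defs
begin


lemma weight_bound:
  assumes "admissible_weight \<omega>" "\<rho> > 1"
  shows "\<exists>C>0. \<forall>n. \<omega> n \<le> C * \<rho>^n"
proof -
  have pos: "\<And>n. \<omega> n > 0" and lim: "(\<lambda>n. \<omega> (Suc n) / \<omega> n) \<longlonglongrightarrow> 1"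
    using assms(1) by (auto simp: admissible_weight_def)
  have "eventually (\<lambda>n. \<omega> (Suc n) / \<omega> n < \<rho>) sequentially"
    using order_tendstoD(2)[OF lim assms(2)] .
  then obtain N where N: "\<And>n. n \<ge> N \<Longrightarrow> \<omega> (Suc n) / \<omega> n < \<rho>"
    by (auto simp: eventually_sequentially)
  have N': "\<omega> (Suc n) \<le> \<rho> * \<omega> n" if "n \<ge> N" for n
    using N[OF that] pos[of n] by (simp add: divide_less_eq less_imp_le)
  have big: "\<omega> n \<le> \<omega> N * \<rho>^(n-N)" if "n \<ge> N" for n
    using that
  proof (induction n rule: dec_induct)
    case base then show ?case by simp
  next
    case (step n)
    have "\<omega> (Suc n) \<le> \<rho> * \<omega> n" using N'[OF step(1)] .
    also have "\<dots> \<le> \<rho> * (\<omega> N * \<rho>^(n-N))" using step assms(2) by simp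
    also have "\<dots> = \<omega> N * \<rho>^(Suc n - N)" using step(1)
      by (simp add: Suc_diff_le)
    finally show ?case .
  qed
  define C where "C = (\<Sum>i\<le>N. \<omega> i) + \<omega> N"
  have Cpos: "C > 0" unfolding C_def using pos[of N] pos by (smt (verit) sum_nonneg)
  have "\<omega> n \<le> C * \<rho>^n" for n
  proof (cases "n \<ge> N")
    case True
    have "\<omega> n \<le> \<omega> N * \<rho>^(n-N)" using big[OF True] .
    also have "\<dots> \<le> \<omega> N * \<rho>^n" using assms(2) pos[of N]
      by (intro mult_left_mono power_increasing) auto
    also have "\<dots> \<le> C * \<rho>^n" unfolding C_def using pos assms(2)
      by (intro mult_right_mono) (auto simp: sum_nonneg less_imp_le)
    finally show ?thesis .
  next
    case False
    have "\<omega> n \<le> (\<Sum>i\<le>N. \<omega> i)" using False pos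
      by (intro member_le_sum) (auto simp: less_imp_le)
    also have "\<dots> \<le> C" unfolding C_def using pos[of N] by simp
    also have "\<dots> \<le> C * \<rho>^n" using Cpos assms(2) by simp
    finally show ?thesis .
  qed
  then show ?thesis using Cpos by blast
qed

lemma tcoef_cong:
  assumes "open S" "0 \<in> S" "\<And>z. z \<in> S \<Longrightarrow> f z = g z"
  shows "tcoef f n = tcoef g n"
proof -
  have "eventually (\<lambda>z. f z = g z) (nhds 0)"
    using eventually_nhds_in_open[OF assms(1,2)] by (rule eventually_mono) (use assms in auto)
  then show ?thesis unfolding tcoef_def by (simp add: higher_deriv_cong_ev)
qed

lemma tcoef_add:
  assumes "f holomorphic_on S" "g holomorphic_on S" "open S" "0 \<in> S"
  shows "tcoef (\<lambda>z. f z + g z) n = tcoef f n + tcoef g n"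
  unfolding tcoef_def using higher_deriv_add[OF assms] by (simp add: add_divide_distrib)

lemma tcoef_diff:
  assumes "f holomorphic_on S" "g holomorphic_on S" "open S" "0 \<in> S"
  shows "tcoef (\<lambda>z. f z - g z) n = tcoef f n - tcoef g n"
  unfolding tcoef_def using higher_deriv_diff[OF assms] by (simp add: diff_divide_distrib)

lemma tcoef_cmult:
  assumes "f holomorphic_on S" "open S" "0 \<in> S"
  shows "tcoef (\<lambda>z. c * f z) n = c * tcoef f n"
  unfolding tcoef_def using higher_deriv_cmult[OF assms(1,3,2)] by simp

lemma higher_deriv_sum:
  fixes f :: "'i \<Rightarrow> complex \<Rightarrow> complex"
  assumes "finite I" "\<And>i. i \<in> I \<Longrightarrow> f i holomorphic_on S" "open S" "z \<in> S"
  shows "(deriv ^^ n) (\<lambda>w. \<Sum>i\<in>I. f i w) z = (\<Sum>i\<in>I. (deriv ^^ n) (f i) z)"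
  using assms(1,2)
proof (induction I rule: finite_induct)
  case empty then show ?case by (simp add: higher_deriv_const)
next
  case (insert x F)
  have h: "(\<lambda>w. \<Sum>i\<in>F. f i w) holomorphic_on S"
    using insert by (intro holomorphic_on_sum) auto
  have "(deriv ^^ n) (\<lambda>w. \<Sum>i\<in>insert x F. f i w) z = (deriv ^^ n) (\<lambda>w. f x w + (\<Sum>i\<in>F. f i w)) z"
    using insert by simp
  also have "\<dots> = (deriv ^^ n) (f x) z + (deriv ^^ n) (\<lambda>w. \<Sum>i\<in>F. f i w) z"
    by (rule higher_deriv_add[OF _ h assms(3,4)]) (use insert in auto)
  finally show ?case using insert by simp
qed

lemma tcoef_sum:
  fixes f :: "'i \<Rightarrow> complex \<Rightarrow> complex"
  assumes "finite I" "\<And>i. i \<in> I \<Longrightarrow> f i holomorphic_on S" "open S" "0 \<in> S"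
  shows "tcoef (\<lambda>w. \<Sum>i\<in>I. f i w) n = (\<Sum>i\<in>I. tcoef (f i) n)"
  unfolding tcoef_def using higher_deriv_sum[OF assms] by (simp add: sum_divide_distrib)

lemma jet_factor:
  assumes "u holomorphic_on S" "open S" "a \<in> S" "\<And>z. z \<in> S \<Longrightarrow> g z = (z-a)^k * u z"
  shows "(deriv ^^ l) g a = (if l < k then 0 else if l = k then fact k * u a else (deriv ^^ l) g a)"
proof -
  have ev: "eventually (\<lambda>z. g z = (z-a)^k * u z) (nhds a)"
    using eventually_nhds_in_open[OF assms(2,3)] by (rule eventually_mono) (use assms in auto)
  have e1: "(deriv ^^ l) g a = (deriv ^^ l) (\<lambda>z. (z-a)^k * u z) a"
    by (rule higher_deriv_cong_ev[OF ev refl])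
  also have "\<dots> = (\<Sum>i = 0..l. of_nat (l choose i) * (deriv ^^ i) (\<lambda>z. (z-a)^k) a * (deriv ^^ (l-i)) u a)"
    by (rule higher_deriv_mult[OF _ assms(1,2,3)]) (intro holomorphic_intros)
  also have "\<dots> = (\<Sum>i = 0..l. of_nat (l choose i) * (pochhammer (of_nat (Suc k - i)) i * 0 ^ (k - i)) * (deriv ^^ (l-i)) u a)"
    by (simp add: higher_deriv_power)
  finally have eq: "(deriv ^^ l) g a = \<dots>" .
  show ?thesis
  proof (cases "l < k")
    case True
    then show ?thesis using eq by (auto intro!: sum.neutral)
  next
    case False
    show ?thesis
    proof (cases "l = k")
      case True
      have "(\<Sum>i = 0..l. of_nat (l choose i) * (pochhammer (of_nat (Suc k - i)) i * 0 ^ (k - i)) * (deriv ^^ (l-i)) u a)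
          = (\<Sum>i \<in> {k}. of_nat (l choose i) * (pochhammer (of_nat (Suc k - i)) i * 0 ^ (k - i)) * (deriv ^^ (l-i)) u a)"
        using True by (intro sum.mono_neutral_right) auto
      also have "\<dots> = fact k * u a" using True by (simp add: pochhammer_fact)
      finally show ?thesis using eq True by simp
    qed (use False in simp)
  qed
qed



lemma tcoef_cauchy:
  assumes "f holomorphic_on ball 0 R" "0 < r" "r < R" "\<And>z. cmod z = r \<Longrightarrow> cmod (f z) \<le> M"
  shows "cmod (tcoef f n) \<le> M / r^n"
proof -
  have "cmod ((deriv ^^ n) f 0) \<le> fact n * M / r^n"
  proof (rule Cauchy_inequality)
    have s1: "cball 0 r \<subseteq> ball (0::complex) R" using assms(3) by (simp add: cball_subset_ball_iff)
    have s2: "ball 0 r \<subseteq> cball (0::complex) r" by (rule ball_subset_cball)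
    show "f holomorphic_on ball 0 r" using assms(1) s1 s2 by (meson holomorphic_on_subset order_trans)
    have "f holomorphic_on cball 0 r" using assms(1) s1 by (rule holomorphic_on_subset)
    then show "continuous_on (cball 0 r) f" by (rule holomorphic_on_imp_continuous_on)
    show "0 < r" by (rule assms(2))
    show "\<And>x. cmod (0 - x) = r \<Longrightarrow> cmod (f x) \<le> M" using assms(4) by simp
  qed
  then show ?thesis unfolding tcoef_def by (simp add: norm_divide field_simps)
qed

lemma bound_on_cball:
  assumes "f holomorphic_on ball 0 R" "r < R"
  shows "\<exists>M. \<forall>z. cmod z \<le> r \<longrightarrow> cmod (f z) \<le> M"
proof -
  have s1: "cball 0 r \<subseteq> ball (0::complex) R" using assms(2) by (simp add: cball_subset_ball_iff)
  have "continuous_on (cball 0 r) f"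
    using holomorphic_on_subset[OF assms(1) s1] by (rule holomorphic_on_imp_continuous_on)
  then have "compact (f ` cball 0 r)" by (intro compact_continuous_image) auto
  then have "bounded (f ` cball 0 r)" by (rule compact_imp_bounded)
  then obtain M where "\<forall>x\<in>f ` cball 0 r. norm x \<le> M" by (auto simp: bounded_iff)
  then show ?thesis by (metis dist_0_norm mem_cball image_eqI)
qed

lemma big_bound:
  assumes "f holomorphic_on ball 0 R" "R > 1"
  shows "\<exists>M r. r > 1 \<and> (\<forall>n. cmod (tcoef f n) \<le> M / r^n)"
proof -
  define r where "r = (1+R)/2"
  have r: "1 < r" "r < R" using assms(2) by (auto simp: r_def)
  obtain M where M: "\<And>z. cmod z \<le> r \<Longrightarrow> cmod (f z) \<le> M" using bound_on_cball[OF assms(1) r(2)] by blast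
  have "cmod (tcoef f n) \<le> M / r^n" for n
    by (rule tcoef_cauchy[OF assms(1)]) (use r M in auto)
  then show ?thesis using r by blast
qed

lemma geo_sq_bound:
  assumes "admissible_weight \<omega>" "r > 1"
  shows "\<exists>K. \<forall>c M. (\<forall>n. cmod (c n) \<le> M / r^n) \<longrightarrow>
     summable (\<lambda>n. \<omega> n * cmod (c n)^2) \<and> (\<Sum>n. \<omega> n * cmod (c n)^2) \<le> M^2 * K"
proof -
  define \<rho> where "\<rho> = sqrt r"
  have \<rho>: "\<rho> > 1" "\<rho> < r" using assms(2) unfolding \<rho>_def
  proof -
    have a: "1 < sqrt r" using assms(2) by simp
    have "sqrt r * 1 < sqrt r * sqrt r" using a by (intro mult_strict_left_mono) auto
    also have "\<dots> = r" using assms(2) by simp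
    finally show "1 < sqrt r" "sqrt r < r" using a by auto
  qed
  obtain C where C: "C > 0" "\<And>n. \<omega> n \<le> C * \<rho>^n" using weight_bound[OF assms(1) \<rho>(1)] by blast
  have pos: "\<And>n. \<omega> n > 0" using assms(1) by (auto simp: admissible_weight_def)
  define q where "q = \<rho> / r^2"
  have q: "0 < q" "q < 1" using \<rho> assms(2) unfolding q_def
  proof -
    have "r < r^2" using assms(2) by (simp add: power2_eq_square)
    then show "0 < \<rho> / r^2" "\<rho> / r^2 < 1" using \<rho> assms(2) by auto
  qed
  have sq: "summable (\<lambda>n. q^n)" using q by (intro summable_geometric) auto
  define K where "K = C * (\<Sum>n. q^n)"
  have "summable (\<lambda>n. \<omega> n * cmod (c n)^2) \<and> (\<Sum>n. \<omega> n * cmod (c n)^2) \<le> M^2 * K"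
    if cb: "\<forall>n. cmod (c n) \<le> M / r^n" for c M
  proof -
    have le: "\<omega> n * cmod (c n)^2 \<le> M^2 * C * q^n" for n
    proof -
      have "cmod (c n)^2 \<le> (M / r^n)^2" using cb by (intro power_mono) auto
      also have "\<dots> = M^2 / (r^2)^n"
      proof -
        have "(r^n)^2 = (r^2)^n" by (metis power_mult mult.commute)
        then show ?thesis by (simp add: power_divide)
      qed
      finally have a: "cmod (c n)^2 \<le> M^2 / (r^2)^n" .
      have "\<omega> n * cmod (c n)^2 \<le> (C * \<rho>^n) * (M^2 / (r^2)^n)"
        using C(2)[of n] a pos[of n] by (intro mult_mono) auto
      also have "\<dots> = M^2 * C * q^n" unfolding q_def by (simp add: power_divide)
      finally show ?thesis .
    qed
    have s2: "summable (\<lambda>n. M^2 * C * q^n)" using sq by (intro summable_mult)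
    have s1: "summable (\<lambda>n. \<omega> n * cmod (c n)^2)"
      by (rule summable_comparison_test'[OF s2]) (use le pos in \<open>auto simp: less_imp_le\<close>)
    have "(\<Sum>n. \<omega> n * cmod (c n)^2) \<le> (\<Sum>n. M^2 * C * q^n)"
      by (rule suminf_le[OF le s1 s2])
    also have "\<dots> = M^2 * K" unfolding K_def using suminf_mult[OF sq, of "M^2*C"] by simp
    finally show ?thesis using s1 by simp
  qed
  then show ?thesis by blast
qed

lemma geo_summables:
  assumes "admissible_weight \<omega>" "r > 1" "\<And>n. cmod (c n) \<le> M / r^n"
  shows "summable (\<lambda>n. \<omega> n * cmod (c n)^2)" "summable (\<lambda>n. \<omega> n * cmod (c n))" "summable (\<lambda>n. cmod (c n))"
proof -
  show "summable (\<lambda>n. \<omega> n * cmod (c n)^2)" using geo_sq_bound[OF assms(1,2)] assms(3) by blast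
  define \<rho> where "\<rho> = sqrt r"
  have \<rho>: "\<rho> > 1" "\<rho> < r" using assms(2) unfolding \<rho>_def
  proof -
    have a: "1 < sqrt r" using assms(2) by simp
    have "sqrt r * 1 < sqrt r * sqrt r" using a by (intro mult_strict_left_mono) auto
    also have "\<dots> = r" using assms(2) by simp
    finally show "1 < sqrt r" "sqrt r < r" using a by auto
  qed
  obtain C where C: "C > 0" "\<And>n. \<omega> n \<le> C * \<rho>^n" using weight_bound[OF assms(1) \<rho>(1)] by blast
  have pos: "\<And>n. \<omega> n > 0" using assms(1) by (auto simp: admissible_weight_def)

  have le1: "\<omega> n * cmod (c n) \<le> M * C * (\<rho>/r)^n" for n
  proof -
    have "\<omega> n * cmod (c n) \<le> (C * \<rho>^n) * (M / r^n)"
      using C(2)[of n] assms(3)[of n] pos[of n] by (intro mult_mono) auto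
    also have "\<dots> = M * C * (\<rho>/r)^n" by (simp add: power_divide)
    finally show ?thesis .
  qed
  have "summable (\<lambda>n. M * C * (\<rho>/r)^n)" using \<rho> by (intro summable_mult summable_geometric) auto
  then show "summable (\<lambda>n. \<omega> n * cmod (c n))"
    by (rule summable_comparison_test'[where N=0]) (use le1 pos in \<open>auto simp: less_imp_le\<close>)
  have le2: "cmod (c n) \<le> M * (1/r)^n" for n using assms(3)[of n] by (simp add: power_divide)
  have "summable (\<lambda>n. M * (1/r)^n)" using assms(2) by (intro summable_mult summable_geometric) auto
  then show "summable (\<lambda>n. cmod (c n))"
    by (rule summable_comparison_test'[where N=0]) (use le2 in auto)
qed

lemma big_summables:
  assumes "admissible_weight \<omega>" "f holomorphic_on ball 0 R" "R > 1"
  shows "summable (\<lambda>n. \<omega> n * cmod (tcoef f n)^2)" "summable (\<lambda>n. \<omega> n * cmod (tcoef f n))"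
        "summable (\<lambda>n. cmod (tcoef f n))"
proof -
  obtain M r where r: "r > 1" and M: "\<And>n. cmod (tcoef f n) \<le> M / r^n"
    using big_bound[OF assms(2,3)] by blast
  show "summable (\<lambda>n. \<omega> n * cmod (tcoef f n)^2)" "summable (\<lambda>n. \<omega> n * cmod (tcoef f n))"
        "summable (\<lambda>n. cmod (tcoef f n))" using geo_summables[OF assms(1) r M] by auto
qed

lemma big_in_H2:
  assumes "admissible_weight \<omega>" "f holomorphic_on ball 0 R" "R > 1"
  shows "in_H2 \<omega> f"
proof -
  have "ball 0 1 \<subseteq> ball (0::complex) R" using assms(3) by (intro subset_ball) auto
  then have "f holomorphic_on ball 0 1" using assms(2) by (rule holomorphic_on_subset[rotated])
  then show ?thesis unfolding in_H2_def using big_summables(1)[OF assms] by auto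
qed



definition kc :: "(nat \<Rightarrow> real) \<Rightarrow> complex \<Rightarrow> nat \<Rightarrow> nat \<Rightarrow> complex" where
  "kc \<omega> lam l n = (if l \<le> n then fact n / fact (n - l) * cnj lam ^ (n - l) / of_real (\<omega> n) else 0)"

lemma Kder_eval: "Kder \<omega> lam l = eval_fps (Abs_fps (kc \<omega> lam l))"
proof (rule ext)
  fix z
  have "(\<lambda>n. if l \<le> n then fact n / fact (n - l) * cnj lam ^ (n - l) * z ^ n / of_real (\<omega> n) else 0)
      = (\<lambda>n. kc \<omega> lam l n * z ^ n)" by (rule ext) (simp add: kc_def)
  then show "Kder \<omega> lam l z = eval_fps (Abs_fps (kc \<omega> lam l)) z"
    unfolding Kder_def eval_fps_def by simp
qed

lemma kc_ratio:
  assumes pos: "\<And>n. \<omega> n > 0" and lam: "lam \<noteq> 0" and n: "l \<le> n"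
  shows "norm (kc \<omega> lam l n) / norm (kc \<omega> lam l (Suc n)) =
         (real n + 1 - real l) / (real n + 1) * (\<omega> (Suc n) / \<omega> n) / cmod lam"
proof -
  obtain m where m: "n = l + m" using n le_Suc_ex by blast
  have a: "norm (kc \<omega> lam l n) = fact n / fact m * cmod lam ^ m / \<omega> n"
    using m pos[of n] by (simp add: kc_def norm_mult norm_divide norm_power)
  have b: "norm (kc \<omega> lam l (Suc n)) = fact (Suc n) / fact (Suc m) * cmod lam ^ (Suc m) / \<omega> (Suc n)"
    using m pos[of "Suc n"] by (simp add: kc_def norm_mult norm_divide norm_power Suc_diff_le del: fact_Suc)
  have c: "real n + 1 - real l = real (Suc m)" using m by simp
  have p: "fact m > (0::real)" "fact n > (0::real)" "cmod lam > 0" using lam by auto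
  have b2: "norm (kc \<omega> lam l (Suc n)) = (real n + 1) * fact n / ((real m + 1) * fact m) * (cmod lam * cmod lam ^ m) / \<omega> (Suc n)"
    unfolding b by (simp add: fact_Suc algebra_simps)
  have q: "norm (kc \<omega> lam l (Suc n)) \<noteq> 0" unfolding b2 using p pos[of "Suc n"]
    by (simp add: add_pos_pos)
  have "norm (kc \<omega> lam l n) = (real m + 1) / (real n + 1) * (\<omega> (Suc n) / \<omega> n) / cmod lam * norm (kc \<omega> lam l (Suc n))"
  proof -
    have nz: "real m + 1 \<noteq> 0" "real n + 1 \<noteq> 0" "fact m \<noteq> (0::real)" "\<omega> n \<noteq> 0" "\<omega> (Suc n) \<noteq> 0" "cmod lam \<noteq> 0"
      using p pos[of n] pos[of "Suc n"] by auto
    have aux: "\<And>Fn Fm am w w' a M N :: real. Fm \<noteq> 0 \<Longrightarrow> w \<noteq> 0 \<Longrightarrow> w' \<noteq> 0 \<Longrightarrow> a \<noteq> 0 \<Longrightarrow> M \<noteq> 0 \<Longrightarrow> N \<noteq> 0 \<Longrightarrow>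
       Fn / Fm * am / w = M / N * (w' / w) / a * (N * Fn / (M * Fm) * (a * am) / w')"
      by (simp add: field_simps)
    show ?thesis unfolding a b2 by (rule aux) (use nz in auto)
  qed
  then show ?thesis unfolding c using q by (simp add: divide_eq_eq)
qed

lemma Kder_radius:
  assumes adm: "admissible_weight \<omega>" and lam: "lam \<noteq> 0"
  shows "fps_conv_radius (Abs_fps (kc \<omega> lam l)) = ereal (1 / cmod lam)"
proof -
  have pos: "\<And>n. \<omega> n > 0" and lim: "(\<lambda>n. \<omega> (Suc n) / \<omega> n) \<longlonglongrightarrow> 1"
    using adm by (auto simp: admissible_weight_def)
  have l1: "(\<lambda>n. (real n + 1 - real l) / (real n + 1)) \<longlonglongrightarrow> 1" by real_asymp
  have "(\<lambda>n. (real n + 1 - real l) / (real n + 1) * (\<omega> (Suc n) / \<omega> n) / cmod lam) \<longlonglongrightarrow> 1 * 1 / cmod lam"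
    by (intro tendsto_intros l1 lim) (use lam in auto)
  then have "(\<lambda>n. (real n + 1 - real l) / (real n + 1) * (\<omega> (Suc n) / \<omega> n) / cmod lam) \<longlonglongrightarrow> 1 / cmod lam"
    by simp
  then have "(\<lambda>n. norm (kc \<omega> lam l n) / norm (kc \<omega> lam l (Suc n))) \<longlonglongrightarrow> 1 / cmod lam"
  proof (rule Lim_transform_eventually)
    show "\<forall>\<^sub>F n in sequentially. (real n + 1 - real l) / (real n + 1) * (\<omega> (Suc n) / \<omega> n) / cmod lam =
         norm (kc \<omega> lam l n) / norm (kc \<omega> lam l (Suc n))"
      using eventually_ge_at_top[of l] by eventually_elim (simp add: kc_ratio[OF pos lam])
  qed
  then have "conv_radius (kc \<omega> lam l) = ereal (1 / cmod lam)"
    by (intro conv_radius_ratio_limit_nonzero[OF refl]) (use lam in auto)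
  then show ?thesis by (simp add: fps_conv_radius_def)
qed

lemma Kder_holo:
  assumes adm: "admissible_weight \<omega>" and lam: "lam \<noteq> 0"
  shows "Kder \<omega> lam l holomorphic_on ball 0 (1 / cmod lam)"
  unfolding Kder_eval
  by (rule holomorphic_on_eval_fps) (simp add: Kder_radius[OF adm lam])

lemma tcoef_Kder:
  assumes adm: "admissible_weight \<omega>" and lam: "lam \<noteq> 0"
  shows "tcoef (Kder \<omega> lam l) n = kc \<omega> lam l n"
proof -
  have "fps_conv_radius (Abs_fps (kc \<omega> lam l)) > 0" using Kder_radius[OF adm lam] lam by simp
  then have "eval_fps (Abs_fps (kc \<omega> lam l)) has_fps_expansion Abs_fps (kc \<omega> lam l)"
    by (rule eval_fps_has_fps_expansion)
  from fps_nth_fps_expansion[OF this, of n] show ?thesis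
    unfolding tcoef_def Kder_eval by simp
qed

lemma tcoef_poly: "tcoef (poly p) n = coeff p n"
proof -
  have e: "eval_fps (fps_of_poly p) = poly p" by (rule ext) simp
  have "eval_fps (fps_of_poly p) has_fps_expansion fps_of_poly p"
    by (rule eval_fps_has_fps_expansion) simp
  from fps_nth_fps_expansion[OF this, of n] show ?thesis
    unfolding tcoef_def e by simp
qed

lemma deriv_series:
  assumes "u holomorphic_on ball 0 R" "cmod w < R"
  shows "(\<lambda>n. tcoef u (n + l) * (fact (n + l) / fact n) * w ^ n) sums (deriv ^^ l) u w"
proof -
  have h: "(deriv ^^ l) u holomorphic_on ball 0 R"
    by (rule holomorphic_higher_deriv[OF assms(1)]) auto
  have "(\<lambda>n. (deriv ^^ n) ((deriv ^^ l) u) 0 / fact n * (w - 0)^n) sums (deriv ^^ l) u w"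
    by (rule holomorphic_power_series[OF h]) (use assms(2) in auto)
  moreover have "(\<lambda>n. (deriv ^^ n) ((deriv ^^ l) u) 0 / fact n * (w - 0)^n) = (\<lambda>n. tcoef u (n + l) * (fact (n + l) / fact n) * w ^ n)"
  proof (rule ext)
    fix n
    have "(deriv ^^ n) ((deriv ^^ l) u) = (deriv ^^ (n + l)) u" by (simp add: funpow_add)
    then show "(deriv ^^ n) ((deriv ^^ l) u) 0 / fact n * (w - 0)^n = tcoef u (n + l) * (fact (n + l) / fact n) * w ^ n"
      unfolding tcoef_def by simp
  qed
  ultimately show ?thesis by simp
qed

lemma reproducing:
  assumes "u holomorphic_on ball 0 R" "cmod lam < R" and pos: "\<And>n. \<omega> n > 0"
  shows "(\<lambda>n. of_real (\<omega> n) * tcoef u n * cnj (kc \<omega> lam l n)) sums (deriv ^^ l) u lam"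
proof -
  let ?g = "\<lambda>n. of_real (\<omega> n) * tcoef u n * cnj (kc \<omega> lam l n)"
  have "(\<lambda>i. ?g (i + l)) sums (deriv ^^ l) u lam"
  proof -
    have "?g (i + l) = tcoef u (i + l) * (fact (i + l) / fact i) * lam ^ i" for i
    proof -
      have "\<omega> (i + l) \<noteq> 0" using pos[of "i+l"] by simp
      then show ?thesis by (simp add: kc_def field_simps)
    qed
    then show ?thesis using deriv_series[OF assms(1,2), of l] by simp
  qed
  moreover have "(\<Sum>i<l. ?g i) = 0" by (simp add: kc_def)
  ultimately show ?thesis using sums_iff_shift[of ?g l] by simp
qed



locale setting =
  fixes \<omega> :: "nat \<Rightarrow> real" and s d0 :: nat and zs :: "nat \<Rightarrow> complex" and m :: "nat \<Rightarrow> nat"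
    and p0 :: "complex poly" and f :: "nat \<Rightarrow> complex \<Rightarrow> complex"
    and b B :: "complex \<Rightarrow> complex"
  assumes adm: "admissible_weight \<omega>"
    and z0: "zs 0 = 0" and zin: "\<forall>j\<le>s. zs j \<in> ball 0 1" and inj: "inj_on zs {0..s}"
    and m1: "\<forall>j\<in>{1..s}. m j \<ge> 1"
    and bdef: "\<forall>z. b z = z ^ d0 * (\<Prod>j\<in>{1..s}. ((z - zs j) / (1 - cnj (zs j) * z)) ^ m j)"
    and deg: "degree p0 = d0"
    and fX: "\<forall>j\<in>{1..s}. in_X_deg \<omega> (zs j) (f j) (m j - 1)"
    and Bdef: "\<forall>z. B z = poly p0 z + (\<Sum>j\<in>{1..s}. f j z)"
    and inner: "H2_inner_fun \<omega> B"
begin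

definition cc where
  "cc = (SOME cc. \<forall>j\<in>{1..s}. cc j (m j - 1) \<noteq> 0 \<and> (\<forall>z. f j z = (\<Sum>i\<le>m j - 1. cc j i * Kder \<omega> (zs j) i z)))"

lemma cc_prop: "\<forall>j\<in>{1..s}. cc j (m j - 1) \<noteq> 0 \<and> (\<forall>z. f j z = (\<Sum>i\<le>m j - 1. cc j i * Kder \<omega> (zs j) i z))"
proof -
  have "\<forall>j\<in>{1..s}. \<exists>c. c (m j - 1) \<noteq> 0 \<and> (\<forall>z. f j z = (\<Sum>i\<le>m j - 1. c i * Kder \<omega> (zs j) i z))"
    using fX by (auto simp: in_X_deg_def)
  then have "\<exists>cc. \<forall>j\<in>{1..s}. cc j (m j - 1) \<noteq> 0 \<and> (\<forall>z. f j z = (\<Sum>i\<le>m j - 1. cc j i * Kder \<omega> (zs j) i z))"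
    by (rule bchoice)
  then show ?thesis unfolding cc_def by (rule someI_ex)
qed

lemma pos: "\<omega> n > 0" using adm by (auto simp: admissible_weight_def)

lemma zj_nz: "j \<in> {1..s} \<Longrightarrow> zs j \<noteq> 0"
  using inj z0 by (metis atLeastAtMost_iff inj_on_eq_iff le0 not_one_le_zero)

lemma zj_lt: "j \<le> s \<Longrightarrow> cmod (zs j) < 1"
  using zin by auto

lemma zj_dist: "i \<in> {1..s} \<Longrightarrow> j \<in> {1..s} \<Longrightarrow> i \<noteq> j \<Longrightarrow> zs i \<noteq> zs j"
  using inj by (auto simp: inj_on_def)

definition R0 where "R0 = Min (insert 2 ((\<lambda>j. 1 / cmod (zs j)) ` {1..s}))"

lemma R0: "R0 > 1" "\<And>j. j \<in> {1..s} \<Longrightarrow> R0 \<le> 1 / cmod (zs j)"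
proof -
  have "1 / cmod (zs j) > 1" if "j \<in> {1..s}" for j
    using zj_lt[of j] zj_nz[OF that] that by (simp add: less_divide_eq)
  then show "R0 > 1" unfolding R0_def by (subst Min_gr_iff) auto
  show "\<And>j. j \<in> {1..s} \<Longrightarrow> R0 \<le> 1 / cmod (zs j)" unfolding R0_def by (intro Min_le) auto
qed

lemma ball_R0_sub: "j \<in> {1..s} \<Longrightarrow> ball 0 R0 \<subseteq> ball 0 (1 / cmod (zs j))"
  using R0(2) by (intro subset_ball) auto

lemma Kz_holo: "j \<in> {1..s} \<Longrightarrow> Kder \<omega> (zs j) i holomorphic_on ball 0 R0"
  using Kder_holo[OF adm zj_nz, of j i] ball_R0_sub by (rule holomorphic_on_subset) auto

lemma B_eq: "B = (\<lambda>z. poly p0 z + (\<Sum>j\<in>{1..s}. \<Sum>i\<le>m j - 1. cc j i * Kder \<omega> (zs j) i z))"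
  using Bdef cc_prop by (auto intro!: ext sum.cong)

lemma B_holo: "B holomorphic_on ball 0 R0"
  unfolding B_eq by (intro holomorphic_intros Kz_holo) auto

lemma tcoef_B: "tcoef B n = coeff p0 n + (\<Sum>j\<in>{1..s}. \<Sum>i\<le>m j - 1. cc j i * kc \<omega> (zs j) i n)"
proof -
  have o: "open (ball (0::complex) R0)" "(0::complex) \<in> ball 0 R0" using R0 by auto
  have h1: "(\<lambda>z. \<Sum>j\<in>{1..s}. \<Sum>i\<le>m j - 1. cc j i * Kder \<omega> (zs j) i z) holomorphic_on ball 0 R0"
    by (intro holomorphic_intros Kz_holo) auto
  have "tcoef B n = tcoef (poly p0) n + tcoef (\<lambda>z. \<Sum>j\<in>{1..s}. \<Sum>i\<le>m j - 1. cc j i * Kder \<omega> (zs j) i z) n"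
    unfolding B_eq by (rule tcoef_add[OF _ h1 o]) (intro holomorphic_intros)
  also have "tcoef (\<lambda>z. \<Sum>j\<in>{1..s}. \<Sum>i\<le>m j - 1. cc j i * Kder \<omega> (zs j) i z) n
      = (\<Sum>j\<in>{1..s}. tcoef (\<lambda>z. \<Sum>i\<le>m j - 1. cc j i * Kder \<omega> (zs j) i z) n)"
    by (rule tcoef_sum[OF _ _ o]) (auto intro!: holomorphic_intros Kz_holo)
  also have "\<dots> = (\<Sum>j\<in>{1..s}. \<Sum>i\<le>m j - 1. cc j i * kc \<omega> (zs j) i n)"
  proof (rule sum.cong[OF refl])
    fix j assume j: "j \<in> {1..s}"
    have "tcoef (\<lambda>z. \<Sum>i\<le>m j - 1. cc j i * Kder \<omega> (zs j) i z) n = (\<Sum>i\<le>m j - 1. tcoef (\<lambda>z. cc j i * Kder \<omega> (zs j) i z) n)"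
      by (rule tcoef_sum[OF _ _ o]) (auto intro!: holomorphic_intros Kz_holo j)
    also have "\<dots> = (\<Sum>i\<le>m j - 1. cc j i * kc \<omega> (zs j) i n)"
      by (intro sum.cong refl) (simp add: tcoef_cmult[OF Kz_holo[OF j] o] tcoef_Kder[OF adm zj_nz[OF j]])
    finally show "tcoef (\<lambda>z. \<Sum>i\<le>m j - 1. cc j i * Kder \<omega> (zs j) i z) n = (\<Sum>i\<le>m j - 1. cc j i * kc \<omega> (zs j) i n)" .
  qed
  finally show ?thesis by (simp add: tcoef_poly)
qed

lemma data_sums:
  assumes u: "u holomorphic_on ball 0 R0"
  shows "(\<lambda>n. of_real (\<omega> n) * tcoef u n * cnj (tcoef B n)) sums
     ((\<Sum>n\<le>d0. of_real (\<omega> n) * tcoef u n * cnj (coeff p0 n)) +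
      (\<Sum>j\<in>{1..s}. \<Sum>i\<le>m j - 1. cnj (cc j i) * (deriv ^^ i) u (zs j)))"
proof -
  have e: "of_real (\<omega> n) * tcoef u n * cnj (tcoef B n) =
     of_real (\<omega> n) * tcoef u n * cnj (coeff p0 n) +
     (\<Sum>j\<in>{1..s}. \<Sum>i\<le>m j - 1. cnj (cc j i) * (of_real (\<omega> n) * tcoef u n * cnj (kc \<omega> (zs j) i n)))" for n
    unfolding tcoef_B by (simp add: algebra_simps sum_distrib_left sum_distrib_right)
  have s1: "(\<lambda>n. of_real (\<omega> n) * tcoef u n * cnj (coeff p0 n)) sums (\<Sum>n\<le>d0. of_real (\<omega> n) * tcoef u n * cnj (coeff p0 n))"
    by (rule sums_finite) (auto simp: coeff_eq_0 deg)
  have s2: "(\<lambda>n. \<Sum>j\<in>{1..s}. \<Sum>i\<le>m j - 1. cnj (cc j i) * (of_real (\<omega> n) * tcoef u n * cnj (kc \<omega> (zs j) i n)))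
      sums (\<Sum>j\<in>{1..s}. \<Sum>i\<le>m j - 1. cnj (cc j i) * (deriv ^^ i) u (zs j))"
  proof (intro sums_sum sums_mult)
    fix j i assume j: "j \<in> {1..s}"
    have "cmod (zs j) < R0" using zj_lt[of j] j R0(1) by auto
    then show "(\<lambda>n. of_real (\<omega> n) * tcoef u n * cnj (kc \<omega> (zs j) i n)) sums (deriv ^^ i) u (zs j)"
      by (rule reproducing[OF u _ pos])
  qed
  show ?thesis unfolding e by (rule sums_add[OF s1 s2])
qed

end


lemma inner_summable:
  assumes w: "\<And>n. \<omega> n \<ge> 0" and a: "summable (\<lambda>n. \<omega> n * cmod (a n)^2)" and c: "summable (\<lambda>n. \<omega> n * cmod (c n)^2)"
  shows "summable (\<lambda>n. of_real (\<omega> n) * a n * cnj (c n))"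
proof (rule summable_norm_cancel, rule summable_comparison_test'[where N=0])
  show "summable (\<lambda>n. \<omega> n * cmod (a n)^2 + \<omega> n * cmod (c n)^2)" using a c by (rule summable_add)
  fix n
  have "norm (of_real (\<omega> n) * a n * cnj (c n)) = \<omega> n * (cmod (a n) * cmod (c n))"
    using w[of n] by (simp add: norm_mult)
  also have "\<dots> \<le> \<omega> n * (cmod (a n)^2 + cmod (c n)^2)"
  proof -
    have "cmod (a n) * cmod (c n) \<le> cmod (a n)^2 + cmod (c n)^2"
      by (smt (verit) mult_left_mono norm_ge_zero power2_eq_square zero_le_square mult_right_mono)
    then show ?thesis using w[of n] by (rule mult_left_mono)
  qed
  finally show "norm (norm (of_real (\<omega> n) * a n * cnj (c n))) \<le> \<omega> n * cmod (a n)^2 + \<omega> n * cmod (c n)^2"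
    by (simp add: algebra_simps)
qed

lemma factor_zero:
  assumes "H holomorphic_on S" "open S" "H a = 0"
  shows "\<exists>H'. H' holomorphic_on S \<and> (\<forall>z\<in>S. H z = (z - a) * H' z)"
proof (intro exI conjI ballI)
  show "(\<lambda>z. if z = a then deriv H a else (H z - H a)/(z-a)) holomorphic_on S"
    by (rule pole_lemma_open[OF assms(1,2)])
  fix z assume "z \<in> S"
  show "H z = (z - a) * (if z = a then deriv H a else (H z - H a)/(z-a))"
    using assms(3) by auto
qed

context setting begin

lemma inner_zero: "m' \<ge> 1 \<Longrightarrow> H2_inner \<omega> (\<lambda>z. z ^ m' * B z) B = 0"
  using inner by (auto simp: H2_inner_fun_def)

lemma o_R0: "open (ball (0::complex) R0)" "(0::complex) \<in> ball 0 R0" using R0 by auto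

lemma holo_sq: "u holomorphic_on ball 0 R0 \<Longrightarrow> summable (\<lambda>n. \<omega> n * cmod (tcoef u n)^2)"
  using big_summables(1)[OF adm _ R0(1)] by blast

lemma inner_sums_holo:
  assumes "u holomorphic_on ball 0 R0" "v holomorphic_on ball 0 R0"
  shows "(\<lambda>n. of_real (\<omega> n) * tcoef u n * cnj (tcoef v n)) sums H2_inner \<omega> u v"
  unfolding H2_inner_def
  by (rule summable_sums, rule inner_summable) (use pos holo_sq assms in \<open>auto simp: less_imp_le\<close>)

lemma qB_inner:
  assumes "poly q 0 = 0"
  shows "H2_inner \<omega> (\<lambda>z. poly q z * B z) B = 0"
proof -
  have hi: "(\<lambda>z. z ^ i * B z) holomorphic_on ball 0 R0" for i
    by (intro holomorphic_intros B_holo)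
  have eqf: "(\<lambda>z. poly q z * B z) = (\<lambda>z. \<Sum>i\<le>degree q. coeff q i * (z ^ i * B z))"
    by (rule ext) (simp add: poly_altdef sum_distrib_right mult.assoc)
  have tc: "tcoef (\<lambda>z. poly q z * B z) n = (\<Sum>i\<le>degree q. coeff q i * tcoef (\<lambda>z. z ^ i * B z) n)" for n
  proof -
    have "tcoef (\<lambda>z. poly q z * B z) n = (\<Sum>i\<le>degree q. tcoef (\<lambda>z. coeff q i * (z ^ i * B z)) n)"
      unfolding eqf by (rule tcoef_sum[OF _ _ o_R0]) (auto intro!: holomorphic_intros B_holo)
    also have "\<dots> = (\<Sum>i\<le>degree q. coeff q i * tcoef (\<lambda>z. z ^ i * B z) n)"
      by (intro sum.cong refl tcoef_cmult[OF hi o_R0])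
    finally show ?thesis .
  qed
  have "(\<lambda>n. of_real (\<omega> n) * tcoef (\<lambda>z. poly q z * B z) n * cnj (tcoef B n)) sums
        (\<Sum>i\<le>degree q. coeff q i * H2_inner \<omega> (\<lambda>z. z ^ i * B z) B)"
  proof -
    have "(\<lambda>n. of_real (\<omega> n) * tcoef (\<lambda>z. poly q z * B z) n * cnj (tcoef B n)) =
      (\<lambda>n. \<Sum>i\<le>degree q. coeff q i * (of_real (\<omega> n) * tcoef (\<lambda>z. z ^ i * B z) n * cnj (tcoef B n)))"
      unfolding tc by (rule ext) (simp add: sum_distrib_left sum_distrib_right algebra_simps)
    moreover have "(\<lambda>n. \<Sum>i\<le>degree q. coeff q i * (of_real (\<omega> n) * tcoef (\<lambda>z. z ^ i * B z) n * cnj (tcoef B n)))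
       sums (\<Sum>i\<le>degree q. coeff q i * H2_inner \<omega> (\<lambda>z. z ^ i * B z) B)"
      by (intro sums_sum sums_mult inner_sums_holo[OF hi B_holo])
    ultimately show ?thesis by simp
  qed
  moreover have "(\<Sum>i\<le>degree q. coeff q i * H2_inner \<omega> (\<lambda>z. z ^ i * B z) B) = 0"
  proof (rule sum.neutral, rule ballI)
    fix i assume "i \<in> {..degree q}"
    show "coeff q i * H2_inner \<omega> (\<lambda>z. z ^ i * B z) B = 0"
    proof (cases "i = 0")
      case True then show ?thesis using assms by (simp add: poly_0_coeff_0)
    next
      case False then show ?thesis using inner_zero[of i] by simp
    qed
  qed
  ultimately show ?thesis unfolding H2_inner_def by (simp add: sums_iff)
qed

end


lemma poly_lin [simp]: "poly [:- a, 1:] (z::complex) = z - a" by simp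

context setting begin

lemma zs_in_R0: "j \<le> s \<Longrightarrow> zs j \<in> ball 0 R0"
  using zj_lt[of j] R0(1) by auto

lemma inner_data:
  assumes "u holomorphic_on ball 0 R0"
  shows "H2_inner \<omega> u B = (\<Sum>n\<le>d0. of_real (\<omega> n) * tcoef u n * cnj (coeff p0 n)) +
      (\<Sum>j\<in>{1..s}. \<Sum>i\<le>m j - 1. cnj (cc j i) * (deriv ^^ i) u (zs j))"
  using data_sums[OF assms] unfolding H2_inner_def by (simp add: sums_iff)

lemma zero_kernel_step:
  assumes T: "T \<subseteq> {1..s}" and j: "j \<in> {1..s}" "j \<notin> T" and r: "r < m j"
    and H: "H holomorphic_on ball 0 R0"
    and eq: "\<forall>z\<in>ball 0 R0. B z = (\<Prod>i\<in>T. (z - zs i)^m i) * (z - zs j)^r * H z"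
  shows "H (zs j) = 0"
proof -
  define U where "U = {1..s} - {j}"
  define qp where "qp = monom 1 (Suc d0) * [:- zs j, 1:]^(m j - 1 - r) * (\<Prod>i\<in>U. [:- zs i, 1:]^(m i))"
  have pq: "poly qp z = z^(Suc d0) * (z - zs j)^(m j - 1 - r) * (\<Prod>i\<in>U. (z - zs i)^m i)" for z
    by (simp add: qp_def poly_monom poly_prod)
  define h where "h z = poly qp z * B z" for z
  have h_holo: "h holomorphic_on ball 0 R0" unfolding h_def by (intro holomorphic_intros B_holo)
  have i0: "H2_inner \<omega> h B = 0" unfolding h_def by (rule qB_inner) (simp add: pq)
  have poly_part: "(\<Sum>n\<le>d0. of_real (\<omega> n) * tcoef h n * cnj (coeff p0 n)) = 0"
  proof (rule sum.neutral, rule ballI)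
    fix n assume n: "n \<in> {..d0}"
    have uh: "(\<lambda>z. (z - zs j)^(m j - 1 - r) * (\<Prod>i\<in>U. (z - zs i)^m i) * B z) holomorphic_on ball 0 R0"
      by (intro holomorphic_intros B_holo)
    have fe: "h z = (z - 0)^(Suc d0) * ((z - zs j)^(m j - 1 - r) * (\<Prod>i\<in>U. (z - zs i)^m i) * B z)" for z
      by (simp add: h_def pq algebra_simps)
    have "(deriv ^^ n) h 0 = 0"
      using jet_factor[OF uh o_R0(1) o_R0(2) fe, of n] n by auto
    then show "of_real (\<omega> n) * tcoef h n * cnj (coeff p0 n) = 0" by (simp add: tcoef_def)
  qed
  define w where "w z = z^(Suc d0) * (\<Prod>i\<in>U. (z - zs i)^m i) * (\<Prod>i\<in>T. (z - zs i)^m i) * H z" for z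
  have kern: "(deriv ^^ i) h (zs j') = (if j' = j \<and> i = m j - 1 then fact (m j - 1) * w (zs j) else 0)"
    if j': "j' \<in> {1..s}" and i: "i \<le> m j' - 1" for j' i
  proof (cases "j' = j")
    case True
    have mj: "m j - 1 - r + r = m j - 1" using r by simp
    have fe: "h z = (z - zs j)^(m j - 1) * w z" if "z \<in> ball 0 R0" for z
    proof -
      have "h z = z^(Suc d0) * (z - zs j)^(m j - 1 - r) * (\<Prod>i\<in>U. (z - zs i)^m i) *
                  ((\<Prod>i\<in>T. (z - zs i)^m i) * (z - zs j)^r * H z)"
        unfolding h_def pq using eq that by simp
      also have "\<dots> = ((z - zs j)^(m j - 1 - r) * (z - zs j)^r) * w z"
        unfolding w_def by (simp add: algebra_simps)
      also have "\<dots> = (z - zs j)^(m j - 1 - r + r) * w z" by (simp only: power_add)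
      also have "\<dots> = (z - zs j)^(m j - 1) * w z" by (simp only: mj)
      finally show ?thesis .
    qed
    have wh: "w holomorphic_on ball 0 R0" unfolding w_def by (intro holomorphic_intros H)
    have "(deriv ^^ i) h (zs j) = (if i < m j - 1 then 0 else if i = m j - 1 then fact (m j - 1) * w (zs j) else (deriv ^^ i) h (zs j))"
      by (rule jet_factor[OF wh o_R0(1) zs_in_R0 fe]) (use j in auto)
    then show ?thesis using True i by auto
  next
    case False
    then have jU: "j' \<in> U" using j' unfolding U_def by auto
    define u' where "u' z = z^(Suc d0) * (z - zs j)^(m j - 1 - r) * (\<Prod>i\<in>U - {j'}. (z - zs i)^m i) * B z" for z
    have fe: "h z = (z - zs j')^(m j') * u' z" if "z \<in> ball 0 R0" for z
    proof -
      have "(\<Prod>i\<in>U. (z - zs i)^m i) = (z - zs j')^(m j') * (\<Prod>i\<in>U - {j'}. (z - zs i)^m i)"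
        using jU unfolding U_def by (subst prod.remove[of _ j']) auto
      then show ?thesis unfolding h_def pq u'_def by (simp add: algebra_simps)
    qed
    have uh: "u' holomorphic_on ball 0 R0" unfolding u'_def by (intro holomorphic_intros B_holo)
    have "(deriv ^^ i) h (zs j') = (if i < m j' then 0 else if i = m j' then fact (m j') * u' (zs j') else (deriv ^^ i) h (zs j'))"
      by (rule jet_factor[OF uh o_R0(1) zs_in_R0 fe]) (use j' in auto)
    moreover have "i < m j'" using i m1 j' by force
    ultimately show ?thesis using False by auto
  qed
  have "0 = (\<Sum>j'\<in>{1..s}. \<Sum>i\<le>m j' - 1. cnj (cc j' i) * (deriv ^^ i) h (zs j'))"
    using inner_data[OF h_holo] i0 poly_part by simp
  also have "\<dots> = (\<Sum>j'\<in>{1..s}. \<Sum>i\<le>m j' - 1. (if j' = j \<and> i = m j - 1 then cnj (cc j (m j - 1)) * (fact (m j - 1) * w (zs j)) else 0))"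
    by (intro sum.cong refl) (auto simp: kern)
  also have "\<dots> = cnj (cc j (m j - 1)) * (fact (m j - 1) * w (zs j))"
  proof -
    have inn: "(\<Sum>i\<le>m j' - 1. (if j' = j \<and> i = m j - 1 then X else 0)) = (if j' = j then X else 0)" for j' and X :: complex
      by (cases "j' = j") auto
    show ?thesis unfolding inn using j by simp
  qed
  finally have "cnj (cc j (m j - 1)) * (fact (m j - 1) * w (zs j)) = 0" by simp
  moreover have "cc j (m j - 1) \<noteq> 0" using cc_prop j by auto
  ultimately have w0: "w (zs j) = 0" by simp
  have n1: "zs j ^ Suc d0 \<noteq> 0" using zj_nz[OF j(1)] by simp
  have n2: "(\<Prod>i\<in>U. (zs j - zs i)^m i) \<noteq> 0"
  proof -
    have "\<forall>i\<in>U. zs j - zs i \<noteq> 0" using zj_dist[of _ j] j unfolding U_def by force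
    then show ?thesis by (simp add: U_def)
  qed
  have n3: "(\<Prod>i\<in>T. (zs j - zs i)^m i) \<noteq> 0"
  proof -
    have "\<forall>i\<in>T. zs j - zs i \<noteq> 0" using zj_dist[of _ j] j T by force
    moreover have "finite T" using T finite_subset by blast
    ultimately show ?thesis by simp
  qed
  show ?thesis using w0 n1 n2 n3 unfolding w_def by simp
qed

end


context setting begin

lemma kernel_factor:
  assumes "T \<subseteq> {1..s}"
  shows "\<exists>H. H holomorphic_on ball 0 R0 \<and> (\<forall>z\<in>ball 0 R0. B z = (\<Prod>i\<in>T. (z - zs i)^m i) * H z)"
proof -
  have "finite T" using assms finite_subset by blast
  then show ?thesis using assms
  proof (induction T rule: finite_subset_induct')
    case empty
    show ?case using B_holo by auto
  next
    case (insert j T)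
    obtain HT where HT: "HT holomorphic_on ball 0 R0" "\<forall>z\<in>ball 0 R0. B z = (\<Prod>i\<in>T. (z - zs i)^m i) * HT z"
      using insert.IH by blast
    have "\<exists>H'. H' holomorphic_on ball 0 R0 \<and> (\<forall>z\<in>ball 0 R0. B z = (\<Prod>i\<in>T. (z - zs i)^m i) * (z - zs j)^r * H' z)"
      if "r \<le> m j" for r
      using that
    proof (induction r)
      case 0
      show ?case using HT by auto
    next
      case (Suc r)
      obtain H' where H': "H' holomorphic_on ball 0 R0" "\<forall>z\<in>ball 0 R0. B z = (\<Prod>i\<in>T. (z - zs i)^m i) * (z - zs j)^r * H' z"
        using Suc by auto
      have "H' (zs j) = 0"
        by (rule zero_kernel_step[OF insert.hyps(3) insert.hyps(2) insert.hyps(4) _ H'(1) H'(2)]) (use Suc in auto)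
      then obtain H'' where H'': "H'' holomorphic_on ball 0 R0" "\<forall>z\<in>ball 0 R0. H' z = (z - zs j) * H'' z"
        using factor_zero[OF H'(1) o_R0(1)] by blast
      show ?case
      proof (intro exI conjI ballI)
        show "H'' holomorphic_on ball 0 R0" by (rule H''(1))
        fix z :: complex assume z: "z \<in> ball 0 R0"
        show "B z = (\<Prod>i\<in>T. (z - zs i)^m i) * (z - zs j)^Suc r * H'' z"
          using H'(2) H''(2) z by simp
      qed
    qed
    then obtain H' where H': "H' holomorphic_on ball 0 R0" "\<forall>z\<in>ball 0 R0. B z = (\<Prod>i\<in>T. (z - zs i)^m i) * (z - zs j)^m j * H' z"
      by blast
    show ?case
    proof (intro exI conjI ballI)
      show "H' holomorphic_on ball 0 R0" by (rule H'(1))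
      fix z :: complex assume z: "z \<in> ball 0 R0"
      show "B z = (\<Prod>i\<in>insert j T. (z - zs i)^m i) * H' z"
        using H'(2) z insert.hyps(1,4) by (simp add: algebra_simps)
    qed
  qed
qed

definition Pk where "Pk z = (\<Prod>i\<in>{1..s}. (z - zs i)^m i)" for z

lemma Pk_holo: "Pk holomorphic_on S" unfolding Pk_def by (intro holomorphic_intros)

lemma Pk0: "Pk 0 \<noteq> 0"
proof -
  have "\<forall>i\<in>{1..s}. 0 - zs i \<noteq> 0" using zj_nz by auto
  then show ?thesis unfolding Pk_def by simp
qed

lemma zero_origin_step:
  assumes r: "r < d0" and H: "H holomorphic_on ball 0 R0"
    and eq: "\<forall>z\<in>ball 0 R0. B z = Pk z * z^r * H z"
  shows "H 0 = 0"
proof -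
  define h where "h z = z^(d0 - r) * B z" for z
  have h_holo: "h holomorphic_on ball 0 R0" unfolding h_def by (intro holomorphic_intros B_holo)
  have i0: "H2_inner \<omega> h B = 0" unfolding h_def using r by (intro inner_zero) auto
  have kern: "(deriv ^^ i) h (zs j) = 0" if j: "j \<in> {1..s}" and i: "i \<le> m j - 1" for j i
  proof -
    define u where "u z = z^(d0 - r) * (\<Prod>i\<in>{1..s} - {j}. (z - zs i)^m i) * z^r * H z" for z
    have fe: "h z = (z - zs j)^(m j) * u z" if "z \<in> ball 0 R0" for z
    proof -
      have "Pk z = (z - zs j)^(m j) * (\<Prod>i\<in>{1..s} - {j}. (z - zs i)^m i)"
        unfolding Pk_def using j by (subst prod.remove[of _ j]) auto
      then show ?thesis unfolding h_def u_def using eq that by (simp add: algebra_simps)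
    qed
    have uh: "u holomorphic_on ball 0 R0" unfolding u_def by (intro holomorphic_intros H)
    have "(deriv ^^ i) h (zs j) = (if i < m j then 0 else if i = m j then fact (m j) * u (zs j) else (deriv ^^ i) h (zs j))"
      by (rule jet_factor[OF uh o_R0(1) zs_in_R0 fe]) (use j in auto)
    moreover have "i < m j" using i m1 j by force
    ultimately show ?thesis by auto
  qed
  have fe0: "h z = (z - 0)^d0 * (Pk z * H z)" if "z \<in> ball 0 R0" for z
  proof -
    have "h z = (z^(d0 - r) * z^r) * (Pk z * H z)" unfolding h_def using eq that by (simp add: algebra_simps)
    also have "z^(d0 - r) * z^r = z^d0" using r by (simp add: power_add[symmetric])
    finally show ?thesis by simp
  qed
  have ph: "(\<lambda>z. Pk z * H z) holomorphic_on ball 0 R0" by (intro holomorphic_intros Pk_holo H)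
  have tc: "tcoef h n = (if n < d0 then 0 else if n = d0 then Pk 0 * H 0 else tcoef h n)" for n
    using jet_factor[OF ph o_R0(1) o_R0(2) fe0, of n] by (auto simp: tcoef_def)
  have "(\<Sum>n\<le>d0. of_real (\<omega> n) * tcoef h n * cnj (coeff p0 n)) =
        (\<Sum>n\<le>d0. if n = d0 then of_real (\<omega> d0) * (Pk 0 * H 0) * cnj (coeff p0 d0) else 0)"
    by (intro sum.cong refl) (subst tc, auto)
  also have "\<dots> = of_real (\<omega> d0) * (Pk 0 * H 0) * cnj (coeff p0 d0)" by simp
  finally have pp: "(\<Sum>n\<le>d0. of_real (\<omega> n) * tcoef h n * cnj (coeff p0 n)) = of_real (\<omega> d0) * (Pk 0 * H 0) * cnj (coeff p0 d0)" .
  have "0 = of_real (\<omega> d0) * (Pk 0 * H 0) * cnj (coeff p0 d0)"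
    using inner_data[OF h_holo] i0 pp kern by simp
  moreover have "coeff p0 d0 \<noteq> 0"
  proof -
    have "p0 \<noteq> 0" using deg r by auto
    then show ?thesis using deg leading_coeff_0_iff by blast
  qed
  moreover have "\<omega> d0 \<noteq> 0" using pos[of d0] by simp
  ultimately show ?thesis using Pk0 by simp
qed

lemma full_factor:
  "\<exists>H. H holomorphic_on ball 0 R0 \<and> (\<forall>z\<in>ball 0 R0. B z = z^d0 * Pk z * H z)"
proof -
  obtain H0 where H0: "H0 holomorphic_on ball 0 R0" "\<forall>z\<in>ball 0 R0. B z = Pk z * H0 z"
    using kernel_factor[of "{1..s}"] unfolding Pk_def by auto
  have "\<exists>H'. H' holomorphic_on ball 0 R0 \<and> (\<forall>z\<in>ball 0 R0. B z = Pk z * z^r * H' z)"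
    if "r \<le> d0" for r
    using that
  proof (induction r)
    case 0
    show ?case using H0 by auto
  next
    case (Suc r)
    obtain H' where H': "H' holomorphic_on ball 0 R0" "\<forall>z\<in>ball 0 R0. B z = Pk z * z^r * H' z"
      using Suc by auto
    have "H' 0 = 0" by (rule zero_origin_step[OF _ H'(1) H'(2)]) (use Suc in auto)
    then obtain H'' where H'': "H'' holomorphic_on ball 0 R0" "\<forall>z\<in>ball 0 R0. H' z = (z - 0) * H'' z"
      using factor_zero[OF H'(1) o_R0(1)] by blast
    show ?case
    proof (intro exI conjI ballI)
      show "H'' holomorphic_on ball 0 R0" by (rule H''(1))
      fix z :: complex assume z: "z \<in> ball 0 R0"
      show "B z = Pk z * z^Suc r * H'' z"
        using H'(2) H''(2) z by (simp add: algebra_simps)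
    qed
  qed
  then obtain H where "H holomorphic_on ball 0 R0" "\<forall>z\<in>ball 0 R0. B z = Pk z * z^d0 * H z" by blast
  then show ?thesis by (intro exI[of _ H]) (auto simp: algebra_simps)
qed

end


lemma taylor_approx:
  assumes adm: "admissible_weight \<omega>" and F: "F holomorphic_on ball 0 R" and R: "1 < R"
    and b: "b holomorphic_on ball 0 R"
  shows "(\<lambda>k. H2_norm \<omega> (\<lambda>z. poly (\<Sum>n\<le>k. monom (tcoef F n) n) z * b z - F z * b z)) \<longlonglongrightarrow> 0"
proof -
  define r1 where "r1 = 1 + (R - 1) / 3"
  define r2 where "r2 = 1 + 2 * (R - 1) / 3"
  have r: "1 < r1" "r1 < r2" "r2 < R" using R by (auto simp: r1_def r2_def field_simps)
  obtain MF where MF: "\<And>z. cmod z \<le> r2 \<Longrightarrow> cmod (F z) \<le> MF" using bound_on_cball[OF F r(3)] by blast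
  obtain Mb where Mb: "\<And>z. cmod z \<le> r1 \<Longrightarrow> cmod (b z) \<le> Mb" using bound_on_cball[OF b, of r1] r by auto
  have MF0: "MF \<ge> 0"
  proof -
    have "cmod (F 0) \<le> MF" using MF[of 0] r by simp
    then show ?thesis using norm_ge_zero[of "F 0"] by linarith
  qed
  have cF: "cmod (tcoef F n) \<le> MF / r2^n" for n
    by (rule tcoef_cauchy[OF F]) (use r MF in auto)
  define \<theta> where "\<theta> = r1 / r2"
  have th: "0 < \<theta>" "\<theta> < 1" using r by (auto simp: \<theta>_def)
  define E where "E k = MF * \<theta>^Suc k / (1 - \<theta>)" for k
  have approx: "cmod (poly (\<Sum>n\<le>k. monom (tcoef F n) n) z - F z) \<le> E k" if z: "cmod z \<le> r1" for z k
  proof -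
    let ?g = "\<lambda>n. tcoef F n * z ^ n"
    have zb: "z \<in> ball 0 R" using z r by auto
    have "(\<lambda>n. (deriv ^^ n) F 0 / fact n * (z - 0)^n) sums F z"
      by (rule holomorphic_power_series[OF F zb])
    then have gs: "?g sums F z" by (simp add: tcoef_def)
    have ps: "poly (\<Sum>n\<le>k. monom (tcoef F n) n) z = (\<Sum>i<Suc k. ?g i)"
      by (simp add: poly_sum poly_monom lessThan_Suc_atMost)
    have sh: "(\<lambda>i. ?g (i + Suc k)) sums (F z - (\<Sum>i<Suc k. ?g i))"
      using gs by (subst sums_iff_shift) simp
    have bnd: "norm (?g (i + Suc k)) \<le> MF * \<theta>^(i + Suc k)" for i
    proof -
      have "norm (?g (i + Suc k)) = cmod (tcoef F (i + Suc k)) * cmod z ^ (i + Suc k)" by (simp add: norm_mult norm_power)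
      also have "\<dots> \<le> (MF / r2^(i + Suc k)) * r1 ^ (i + Suc k)"
        by (intro mult_mono cF power_mono z) (use MF0 r in auto)
      also have "\<dots> = MF * \<theta>^(i + Suc k)" by (simp add: \<theta>_def power_divide)
      finally show ?thesis .
    qed
    have gsum: "(\<lambda>i. MF * \<theta>^(i + Suc k)) sums (MF * \<theta>^Suc k / (1 - \<theta>))"
    proof -
      have "(\<lambda>i. \<theta>^i) sums (1 / (1 - \<theta>))" using th by (intro geometric_sums) auto
      from sums_mult[OF this, of "MF * \<theta>^Suc k"] show ?thesis by (simp add: power_add algebra_simps)
    qed
    have "cmod (F z - (\<Sum>i<Suc k. ?g i)) \<le> MF * \<theta>^Suc k / (1 - \<theta>)"
      using norm_suminf_le[OF bnd sums_summable[OF gsum]] sums_unique[OF sh] sums_unique[OF gsum] by simp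
    then show ?thesis unfolding ps E_def by (simp add: norm_minus_commute)
  qed
  obtain K where K: "\<And>c M. (\<forall>n. cmod (c n) \<le> M / r1^n) \<Longrightarrow>
     summable (\<lambda>n. \<omega> n * cmod (c n)^2) \<and> (\<Sum>n. \<omega> n * cmod (c n)^2) \<le> M^2 * K"
    using geo_sq_bound[OF adm r(1)] by blast
  define gk where "gk k z = poly (\<Sum>n\<le>k. monom (tcoef F n) n) z * b z - F z * b z" for k z
  have upper: "H2_norm \<omega> (gk k) \<le> sqrt ((E k * Mb)^2 * K)" for k
  proof -
    have gh: "gk k holomorphic_on ball 0 R" unfolding gk_def by (intro holomorphic_intros F b)
    have "cmod (tcoef (gk k) n) \<le> (E k * Mb) / r1^n" for n
    proof (rule tcoef_cauchy[OF gh])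
      fix z :: complex assume z: "cmod z = r1"
      have "cmod (gk k z) = cmod (poly (\<Sum>n\<le>k. monom (tcoef F n) n) z - F z) * cmod (b z)"
        unfolding gk_def by (simp add: norm_mult flip: left_diff_distrib)
      also have "\<dots> \<le> E k * Mb"
      proof -
        have a1: "cmod (poly (\<Sum>n\<le>k. monom (tcoef F n) n) z - F z) \<le> E k" using approx[of z k] z by simp
        have a2: "cmod (b z) \<le> Mb" using Mb[of z] z by simp
        have "0 \<le> E k" using a1 norm_ge_zero order_trans by blast
        then show ?thesis using a1 a2 by (intro mult_mono) auto
      qed
      finally show "cmod (gk k z) \<le> E k * Mb" .
    qed (use r in auto)
    then have "(\<Sum>n. \<omega> n * cmod (tcoef (gk k) n)^2) \<le> (E k * Mb)^2 * K" using K by blast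
    then show ?thesis unfolding H2_norm_def by (rule real_sqrt_le_mono)
  qed
  have lower: "0 \<le> H2_norm \<omega> (gk k)" for k
  proof -
    have "gk k holomorphic_on ball 0 R" unfolding gk_def by (intro holomorphic_intros F b)
    then have sm: "summable (\<lambda>n. \<omega> n * cmod (tcoef (gk k) n)^2)" by (rule big_summables(1)[OF adm _ R])
    have "\<And>n. \<omega> n > 0" using adm by (auto simp: admissible_weight_def)
    then have "0 \<le> (\<Sum>n. \<omega> n * cmod (tcoef (gk k) n)^2)"
      by (intro suminf_nonneg[OF sm]) (simp add: less_imp_le)
    then show ?thesis unfolding H2_norm_def by simp
  qed
  have E0: "E \<longlonglongrightarrow> 0"
  proof -
    have "(\<lambda>k. MF * (\<theta> * \<theta>^k) / (1 - \<theta>)) \<longlonglongrightarrow> MF * (\<theta> * 0) / (1 - \<theta>)"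
      using th by (intro tendsto_divide tendsto_mult tendsto_const LIMSEQ_power_zero) auto
    then show ?thesis unfolding E_def by simp
  qed
  have "(\<lambda>k. sqrt ((E k * Mb)^2 * K)) \<longlonglongrightarrow> sqrt ((0 * Mb)^2 * K)"
    by (intro tendsto_real_sqrt tendsto_mult tendsto_power E0 tendsto_const)
  then have up0: "(\<lambda>k. sqrt ((E k * Mb)^2 * K)) \<longlonglongrightarrow> 0" by simp
  have "(\<lambda>k. H2_norm \<omega> (gk k)) \<longlonglongrightarrow> 0"
  proof (rule tendsto_sandwich[OF _ _ tendsto_const up0])
    show "\<forall>\<^sub>F k in sequentially. 0 \<le> H2_norm \<omega> (gk k)" using lower by simp
    show "\<forall>\<^sub>F k in sequentially. H2_norm \<omega> (gk k) \<le> sqrt ((E k * Mb)^2 * K)" using upper by simp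
  qed
  then show ?thesis unfolding gk_def .
qed



lemma H2_coef_bound:
  assumes adm: "admissible_weight \<omega>" and f: "in_H2 \<omega> f"
  shows "sqrt (\<omega> n) * cmod (tcoef f n) \<le> H2_norm \<omega> f"
proof -
  have pos: "\<And>n. \<omega> n > 0" using adm by (auto simp: admissible_weight_def)
  have sm: "summable (\<lambda>n. \<omega> n * cmod (tcoef f n)^2)" using f by (simp add: in_H2_def)
  have "(\<Sum>i\<in>{n}. \<omega> i * cmod (tcoef f i)^2) \<le> (\<Sum>i. \<omega> i * cmod (tcoef f i)^2)"
    by (rule sum_le_suminf[OF sm]) (use pos in \<open>auto simp: less_imp_le\<close>)
  then have "\<omega> n * cmod (tcoef f n)^2 \<le> (\<Sum>i. \<omega> i * cmod (tcoef f i)^2)" by simp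
  then have "sqrt (\<omega> n * cmod (tcoef f n)^2) \<le> H2_norm \<omega> f" unfolding H2_norm_def by (rule real_sqrt_le_mono)
  moreover have "sqrt (\<omega> n * cmod (tcoef f n)^2) = sqrt (\<omega> n) * cmod (tcoef f n)"
    by (simp add: real_sqrt_mult)
  ultimately show ?thesis by simp
qed

lemma H2_scale:
  assumes f: "in_H2 \<omega> f"
  shows "in_H2 \<omega> (\<lambda>z. c * f z)" "H2_norm \<omega> (\<lambda>z. c * f z) = cmod c * H2_norm \<omega> f"
proof -
  have h: "f holomorphic_on ball 0 1" and sm: "summable (\<lambda>n. \<omega> n * cmod (tcoef f n)^2)"
    using f by (auto simp: in_H2_def)
  have tc: "tcoef (\<lambda>z. c * f z) n = c * tcoef f n" for n
    by (rule tcoef_cmult[OF h]) auto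
  have e: "(\<lambda>n. \<omega> n * cmod (tcoef (\<lambda>z. c * f z) n)^2) = (\<lambda>n. cmod c ^ 2 * (\<omega> n * cmod (tcoef f n)^2))"
    by (rule ext) (simp add: tc norm_mult power_mult_distrib)
  show "in_H2 \<omega> (\<lambda>z. c * f z)" unfolding in_H2_def e
    using h sm by (auto intro!: holomorphic_intros summable_mult)
  show "H2_norm \<omega> (\<lambda>z. c * f z) = cmod c * H2_norm \<omega> f"
    unfolding H2_norm_def e suminf_mult[OF sm] by (simp add: real_sqrt_mult)
qed

lemma Hb_scale:
  assumes "in_Hb \<omega> b G"
  shows "in_Hb \<omega> b (\<lambda>z. c * G z)"
proof -
  obtain p where G: "G holomorphic_on ball 0 1" "in_H2 \<omega> (\<lambda>z. G z * b z)"
    and p: "\<And>k. in_H2 \<omega> (\<lambda>z. poly (p k) z * b z - G z * b z)"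
      "(\<lambda>k. H2_norm \<omega> (\<lambda>z. poly (p k) z * b z - G z * b z)) \<longlonglongrightarrow> 0"
    using assms unfolding in_Hb_def by blast
  have e1: "(\<lambda>z. c * G z * b z) = (\<lambda>z. c * (G z * b z))" by (simp add: mult.assoc)
  have e2: "(\<lambda>z. poly (smult c (p k)) z * b z - c * G z * b z) = (\<lambda>z. c * (poly (p k) z * b z - G z * b z))" for k
    by (simp add: algebra_simps)
  show ?thesis unfolding in_Hb_def
  proof (intro conjI exI[of _ "\<lambda>k. smult c (p k)"] allI)
    show "(\<lambda>z. c * G z) holomorphic_on ball 0 1" using G(1) by (intro holomorphic_intros)
    show "in_H2 \<omega> (\<lambda>z. c * G z * b z)" unfolding e1 by (rule H2_scale(1)[OF G(2)])
    fix k show "in_H2 \<omega> (\<lambda>z. poly (smult c (p k)) z * b z - c * G z * b z)"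
      unfolding e2 by (rule H2_scale(1)[OF p(1)])
  next
    show "(\<lambda>k. H2_norm \<omega> (\<lambda>z. poly (smult c (p k)) z * b z - c * G z * b z)) \<longlonglongrightarrow> 0"
      unfolding e2 H2_scale(2)[OF p(1)] using tendsto_mult_right_zero[OF p(2)] by simp
  qed
qed

context setting begin

definition Hf where "Hf = (SOME H. H holomorphic_on ball 0 R0 \<and> (\<forall>z\<in>ball 0 R0. B z = z^d0 * Pk z * H z))"

lemma Hf: "Hf holomorphic_on ball 0 R0" "\<And>z. z \<in> ball 0 R0 \<Longrightarrow> B z = z^d0 * Pk z * Hf z"
proof -
  have "Hf holomorphic_on ball 0 R0 \<and> (\<forall>z\<in>ball 0 R0. B z = z^d0 * Pk z * Hf z)"
    unfolding Hf_def by (rule someI_ex[OF full_factor])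
  then show "Hf holomorphic_on ball 0 R0" "\<And>z. z \<in> ball 0 R0 \<Longrightarrow> B z = z^d0 * Pk z * Hf z" by auto
qed

definition bt where "bt z = (\<Prod>i\<in>{1..s}. (1 - cnj (zs i) * z)^m i)" for z

definition Ff where "Ff z = Hf z * bt z" for z

lemma bt_nz: "z \<in> ball 0 R0 \<Longrightarrow> bt z \<noteq> 0"
proof -
  assume z: "z \<in> ball 0 R0"
  have "1 - cnj (zs i) * z \<noteq> 0" if i: "i \<in> {1..s}" for i
  proof
    assume "1 - cnj (zs i) * z = 0"
    then have "cmod (cnj (zs i) * z) = 1" by (metis eq_iff_diff_eq_0 norm_one)
    moreover have "cmod (cnj (zs i) * z) < 1"
    proof -
      have zi: "cmod (zs i) > 0" using zj_nz[OF i] by simp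
      have "cmod (cnj (zs i) * z) = cmod (zs i) * cmod z" by (simp add: norm_mult)
      also have "\<dots> < cmod (zs i) * R0" using z zi by (intro mult_strict_left_mono) auto
      also have "\<dots> \<le> cmod (zs i) * (1 / cmod (zs i))" using R0(2)[OF i] zi by (intro mult_left_mono) auto
      also have "\<dots> = 1" using zi by simp
      finally show ?thesis .
    qed
    ultimately show False by simp
  qed
  then show "bt z \<noteq> 0" unfolding bt_def by simp
qed

lemma bt_holo: "bt holomorphic_on S" unfolding bt_def by (intro holomorphic_intros)

lemma b_eq: "b z = z^d0 * Pk z / bt z"
  using bdef by (simp add: Pk_def bt_def power_divide prod_dividef)

lemma b_holo: "b holomorphic_on ball 0 R0"
proof -
  have "(\<lambda>z. z^d0 * Pk z / bt z) holomorphic_on ball 0 R0"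
    by (intro holomorphic_intros Pk_holo bt_holo) (use bt_nz in auto)
  moreover have "b = (\<lambda>z. z^d0 * Pk z / bt z)" using b_eq by (intro ext) simp
  ultimately show ?thesis by simp
qed

lemma Ff_holo: "Ff holomorphic_on ball 0 R0"
  unfolding Ff_def by (intro holomorphic_intros Hf(1) bt_holo)

lemma Fb: "z \<in> ball 0 R0 \<Longrightarrow> Ff z * b z = B z"
  using bt_nz[of z] Hf(2)[of z] unfolding Ff_def b_eq by (simp add: field_simps)

lemma ball1_sub: "ball (0::complex) 1 \<subseteq> ball 0 R0" using R0(1) by (intro subset_ball) auto

lemma F_in_Hb: "in_Hb \<omega> b Ff"
  unfolding in_Hb_def
proof (intro conjI exI[of _ "\<lambda>k. \<Sum>n\<le>k. monom (tcoef Ff n) n"] allI)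
  show "Ff holomorphic_on ball 0 1" using Ff_holo ball1_sub by (rule holomorphic_on_subset)
  show "in_H2 \<omega> (\<lambda>z. Ff z * b z)" by (rule big_in_H2[OF adm _ R0(1)]) (intro holomorphic_intros Ff_holo b_holo)
  fix k
  show "in_H2 \<omega> (\<lambda>z. poly (\<Sum>n\<le>k. monom (tcoef Ff n) n) z * b z - Ff z * b z)"
    by (rule big_in_H2[OF adm _ R0(1)]) (intro holomorphic_intros Ff_holo b_holo)
next
  show "(\<lambda>k. H2_norm \<omega> (\<lambda>z. poly (\<Sum>n\<le>k. monom (tcoef Ff n) n) z * b z - Ff z * b z)) \<longlonglongrightarrow> 0"
    by (rule taylor_approx[OF adm Ff_holo R0(1) b_holo])
qed

end


lemma sqrt_le_1_plus: "x \<ge> 0 \<Longrightarrow> sqrt x \<le> 1 + (x::real)"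
proof -
  assume x: "x \<ge> 0"
  show ?thesis
  proof (cases "x \<le> 1")
    case True
    then have "sqrt x \<le> 1" by simp
    then show ?thesis using x by linarith
  next
    case False
    then have "sqrt x \<le> x" using real_sqrt_le_mono[of x "x*x"] x by (simp add: mult_le_cancel_left1)
    then show ?thesis by linarith
  qed
qed

context setting begin

definition alpha where "alpha = H2_inner \<omega> b B"

lemma poly_inner: "H2_inner \<omega> (\<lambda>z. poly p z * b z) B = poly p 0 * alpha"
proof -
  have ph: "(\<lambda>z. poly p z - poly p 0) holomorphic_on ball 0 R0" by (intro holomorphic_intros)
  obtain q where q: "q holomorphic_on ball 0 R0" "\<forall>z\<in>ball 0 R0. poly p z - poly p 0 = (z - 0) * q z"
  proof -
    have "\<exists>H'. H' holomorphic_on ball 0 R0 \<and> (\<forall>z\<in>ball 0 R0. poly p z - poly p 0 = (z - 0) * H' z)"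
      using factor_zero[OF ph o_R0(1), of 0] by simp
    then show ?thesis using that by blast
  qed
  define u where "u z = (poly p z - poly p 0) * b z" for z
  have uh: "u holomorphic_on ball 0 R0" unfolding u_def by (intro holomorphic_intros b_holo)
  have pp: "(\<Sum>n\<le>d0. of_real (\<omega> n) * tcoef u n * cnj (coeff p0 n)) = 0"
  proof (rule sum.neutral, rule ballI)
    fix n assume n: "n \<in> {..d0}"
    have vh: "(\<lambda>z. q z * (Pk z / bt z)) holomorphic_on ball 0 R0"
      by (intro holomorphic_intros q(1) Pk_holo bt_holo) (use bt_nz in auto)
    have fe: "u z = (z - 0)^(Suc d0) * (q z * (Pk z / bt z))" if "z \<in> ball 0 R0" for z
    proof -
      have "u z = ((z - 0) * q z) * (z^d0 * Pk z / bt z)" using q(2) that unfolding u_def b_eq by simp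
      then show ?thesis by (simp add: mult_ac)
    qed
    have "(deriv ^^ n) u 0 = 0" using jet_factor[OF vh o_R0(1) o_R0(2) fe, of n] n by auto
    then show "of_real (\<omega> n) * tcoef u n * cnj (coeff p0 n) = 0" by (simp add: tcoef_def)
  qed
  have kern: "(deriv ^^ i) u (zs j) = 0" if j: "j \<in> {1..s}" and i: "i \<le> m j - 1" for j i
  proof -
    define v where "v z = (poly p z - poly p 0) * z^d0 * (\<Prod>i\<in>{1..s} - {j}. (z - zs i)^m i) / bt z" for z
    have vh: "v holomorphic_on ball 0 R0" unfolding v_def
      by (intro holomorphic_intros bt_holo) (use bt_nz in auto)
    have fe: "u z = (z - zs j)^(m j) * v z" if "z \<in> ball 0 R0" for z
    proof -
      have "Pk z = (z - zs j)^(m j) * (\<Prod>i\<in>{1..s} - {j}. (z - zs i)^m i)"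
        unfolding Pk_def using j by (subst prod.remove[of _ j]) auto
      then show ?thesis unfolding u_def v_def b_eq by (simp add: mult_ac)
    qed
    have "(deriv ^^ i) u (zs j) = (if i < m j then 0 else if i = m j then fact (m j) * v (zs j) else (deriv ^^ i) u (zs j))"
      by (rule jet_factor[OF vh o_R0(1) zs_in_R0 fe]) (use j in auto)
    moreover have "i < m j" using i m1 j by force
    ultimately show ?thesis by auto
  qed
  have u0: "H2_inner \<omega> u B = 0" using inner_data[OF uh] pp kern by simp
  have tc: "tcoef (\<lambda>z. poly p z * b z) n = tcoef u n + poly p 0 * tcoef b n" for n
  proof -
    have "(\<lambda>z. poly p z * b z) = (\<lambda>z. u z + poly p 0 * b z)" unfolding u_def by (rule ext) (simp add: algebra_simps)
    then have "tcoef (\<lambda>z. poly p z * b z) n = tcoef u n + tcoef (\<lambda>z. poly p 0 * b z) n"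
      using tcoef_add[OF uh _ o_R0] by (simp add: holomorphic_intros b_holo)
    also have "tcoef (\<lambda>z. poly p 0 * b z) n = poly p 0 * tcoef b n" by (rule tcoef_cmult[OF b_holo o_R0])
    finally show ?thesis .
  qed
  have "(\<lambda>n. of_real (\<omega> n) * tcoef (\<lambda>z. poly p z * b z) n * cnj (tcoef B n)) =
        (\<lambda>n. of_real (\<omega> n) * tcoef u n * cnj (tcoef B n) + poly p 0 * (of_real (\<omega> n) * tcoef b n * cnj (tcoef B n)))"
    unfolding tc by (rule ext) (simp add: algebra_simps)
  moreover have "(\<lambda>n. of_real (\<omega> n) * tcoef u n * cnj (tcoef B n) + poly p 0 * (of_real (\<omega> n) * tcoef b n * cnj (tcoef B n)))
      sums (H2_inner \<omega> u B + poly p 0 * H2_inner \<omega> b B)"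
    by (intro sums_add sums_mult inner_sums_holo uh b_holo B_holo)
  ultimately show ?thesis unfolding H2_inner_def[of \<omega> "\<lambda>z. poly p z * b z"] alpha_def u0
    by (simp add: sums_iff)
qed

end


context setting begin

lemma b_holo1: "b holomorphic_on ball 0 1" using b_holo ball1_sub by (rule holomorphic_on_subset)

lemma G_inner:
  assumes "in_Hb \<omega> b G"
  shows "H2_inner \<omega> (\<lambda>z. G z * b z) B = G 0 * alpha"
proof -
  obtain pp where G: "G holomorphic_on ball 0 1" "in_H2 \<omega> (\<lambda>z. G z * b z)"
    and pp0: "\<And>k. in_H2 \<omega> (\<lambda>z. poly (pp k) z * b z - G z * b z)"
      "(\<lambda>k. H2_norm \<omega> (\<lambda>z. poly (pp k) z * b z - G z * b z)) \<longlonglongrightarrow> 0"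
    using assms unfolding in_Hb_def by blast
  define D where "D k z = poly (pp k) z * b z - G z * b z" for k z
  define Gb where "Gb z = G z * b z" for z
  have Dh: "in_H2 \<omega> (D k)" for k using pp0(1) unfolding D_def .
  have Dn: "(\<lambda>k. H2_norm \<omega> (D k)) \<longlonglongrightarrow> 0" using pp0(2) unfolding D_def .
  have Gbh: "Gb holomorphic_on ball 0 1" unfolding Gb_def by (intro holomorphic_intros G(1) b_holo1)
  have Gb2: "in_H2 \<omega> Gb" using G(2) unfolding Gb_def .
  have pbh: "(\<lambda>z. poly (pp k) z * b z) holomorphic_on ball 0 R0" for k by (intro holomorphic_intros b_holo)
  have pbh1: "(\<lambda>z. poly (pp k) z * b z) holomorphic_on ball 0 1" for k by (intro holomorphic_intros b_holo1)
  have o1: "open (ball (0::complex) 1)" "(0::complex) \<in> ball 0 1" by auto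
  have sGb: "summable (\<lambda>n. of_real (\<omega> n) * tcoef Gb n * cnj (tcoef B n))"
    by (rule inner_summable) (use pos Gb2 holo_sq[OF B_holo] in \<open>auto simp: in_H2_def less_imp_le\<close>)
  have e1: "H2_inner \<omega> (D k) B = poly (pp k) 0 * alpha - H2_inner \<omega> Gb B" for k
  proof -
    have tc: "tcoef (D k) n = tcoef (\<lambda>z. poly (pp k) z * b z) n - tcoef Gb n" for n
      unfolding D_def Gb_def by (rule tcoef_diff[OF pbh1 _ o1]) (intro holomorphic_intros G(1) b_holo1)
    have "(\<lambda>n. of_real (\<omega> n) * tcoef (D k) n * cnj (tcoef B n)) =
      (\<lambda>n. of_real (\<omega> n) * tcoef (\<lambda>z. poly (pp k) z * b z) n * cnj (tcoef B n) - of_real (\<omega> n) * tcoef Gb n * cnj (tcoef B n))"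
      unfolding tc by (rule ext) (simp add: algebra_simps)
    moreover have "(\<lambda>n. of_real (\<omega> n) * tcoef (\<lambda>z. poly (pp k) z * b z) n * cnj (tcoef B n) - of_real (\<omega> n) * tcoef Gb n * cnj (tcoef B n))
       sums (H2_inner \<omega> (\<lambda>z. poly (pp k) z * b z) B - H2_inner \<omega> Gb B)"
      using sums_diff[OF inner_sums_holo[OF pbh B_holo] summable_sums[OF sGb]] unfolding H2_inner_def[of \<omega> Gb] .
    ultimately show ?thesis unfolding H2_inner_def[of \<omega> "D k"] poly_inner by (simp add: sums_iff)
  qed
  define SB where "SB = (\<Sum>n. (1 + \<omega> n) * cmod (tcoef B n))"
  have sB: "summable (\<lambda>n. (1 + \<omega> n) * cmod (tcoef B n))"
    using summable_add[OF big_summables(3)[OF adm B_holo R0(1)] big_summables(2)[OF adm B_holo R0(1)]]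
    by (simp add: algebra_simps)
  have e2: "norm (H2_inner \<omega> (D k) B) \<le> H2_norm \<omega> (D k) * SB" for k
  proof -
    let ?N = "H2_norm \<omega> (D k)"
    have bnd: "norm (of_real (\<omega> n) * tcoef (D k) n * cnj (tcoef B n)) \<le> ?N * ((1 + \<omega> n) * cmod (tcoef B n))" for n
    proof -
      have w: "\<omega> n > 0" by (rule pos)
      have cb: "sqrt (\<omega> n) * cmod (tcoef (D k) n) \<le> ?N" by (rule H2_coef_bound[OF adm Dh])
      have "norm (of_real (\<omega> n) * tcoef (D k) n * cnj (tcoef B n)) = sqrt (\<omega> n) * (sqrt (\<omega> n) * cmod (tcoef (D k) n)) * cmod (tcoef B n)"
        using w by (simp add: norm_mult mult.assoc[symmetric])
      also have "\<dots> \<le> (1 + \<omega> n) * ?N * cmod (tcoef B n)"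
        by (intro mult_right_mono mult_mono cb sqrt_le_1_plus) (use w in auto)
      finally show ?thesis by (simp add: algebra_simps)
    qed
    have "norm (H2_inner \<omega> (D k) B) \<le> (\<Sum>n. ?N * ((1 + \<omega> n) * cmod (tcoef B n)))"
      unfolding H2_inner_def by (rule norm_suminf_le[OF bnd summable_mult[OF sB]])
    also have "\<dots> = ?N * SB" unfolding SB_def by (rule suminf_mult[OF sB])
    finally show ?thesis .
  qed
  have e3: "(\<lambda>k. H2_inner \<omega> (D k) B) \<longlonglongrightarrow> 0"
  proof (rule Lim_null_comparison)
    show "\<forall>\<^sub>F k in sequentially. norm (H2_inner \<omega> (D k) B) \<le> H2_norm \<omega> (D k) * SB" using e2 by simp
    show "(\<lambda>k. H2_norm \<omega> (D k) * SB) \<longlonglongrightarrow> 0" using tendsto_mult_left_zero[OF Dn] by simp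
  qed
  define beta where "beta = Pk 0 / bt 0"
  have beta: "beta \<noteq> 0" unfolding beta_def using Pk0 bt_nz[of 0] R0(1) by simp
  have tcD: "tcoef (D k) d0 = (poly (pp k) 0 - G 0) * beta" for k
  proof -
    have bt1: "\<And>z. z \<in> ball 0 1 \<Longrightarrow> bt z \<noteq> 0" using bt_nz ball1_sub by auto
    have uh: "(\<lambda>z. (poly (pp k) z - G z) * (Pk z / bt z)) holomorphic_on ball 0 1"
      by (intro holomorphic_intros G(1) Pk_holo bt_holo) (use bt1 in auto)
    have fe: "D k z = (z - 0)^d0 * ((poly (pp k) z - G z) * (Pk z / bt z))" for z
    proof -
      have "D k z = (poly (pp k) z - G z) * (z^d0 * Pk z / bt z)" unfolding D_def b_eq by (simp only: left_diff_distrib)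
      then show ?thesis by (simp add: mult_ac)
    qed
    have "(deriv ^^ d0) (D k) 0 = fact d0 * ((poly (pp k) 0 - G 0) * (Pk 0 / bt 0))"
      using jet_factor[OF uh o1 fe, of d0] by simp
    then show ?thesis unfolding tcoef_def beta_def by simp
  qed
  have e4: "(\<lambda>k. poly (pp k) 0) \<longlonglongrightarrow> G 0"
  proof -
    have "(\<lambda>k. tcoef (D k) d0) \<longlonglongrightarrow> 0"
    proof (rule Lim_null_comparison)
      have w: "sqrt (\<omega> d0) > 0" using pos[of d0] by simp
      show "\<forall>\<^sub>F k in sequentially. norm (tcoef (D k) d0) \<le> H2_norm \<omega> (D k) / sqrt (\<omega> d0)"
        using H2_coef_bound[OF adm Dh] w by (simp add: field_simps mult.commute)
      show "(\<lambda>k. H2_norm \<omega> (D k) / sqrt (\<omega> d0)) \<longlonglongrightarrow> 0"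
        using tendsto_divide[OF Dn tendsto_const, of "sqrt (\<omega> d0)"] w by simp
    qed
    then have "(\<lambda>k. tcoef (D k) d0 / beta) \<longlonglongrightarrow> 0 / beta" by (intro tendsto_divide tendsto_const) (use beta in auto)
    then have "(\<lambda>k. poly (pp k) 0 - G 0) \<longlonglongrightarrow> 0" unfolding tcD using beta by simp
    then show ?thesis by (rule LIM_zero_cancel)
  qed
  have "(\<lambda>k. poly (pp k) 0 * alpha - H2_inner \<omega> (D k) B) \<longlonglongrightarrow> G 0 * alpha - 0"
    by (intro tendsto_intros e3 e4)
  moreover have "(\<lambda>k. poly (pp k) 0 * alpha - H2_inner \<omega> (D k) B) = (\<lambda>k. H2_inner \<omega> Gb B)"
    using e1 by (intro ext) simp
  ultimately have "(\<lambda>k. H2_inner \<omega> Gb B) \<longlonglongrightarrow> G 0 * alpha" by simp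
  then have "H2_inner \<omega> Gb B = G 0 * alpha" using tendsto_const LIMSEQ_unique by blast
  then show ?thesis unfolding Gb_def .
qed

end


context setting begin

lemma BB: "H2_inner \<omega> B B = 1"
proof -
  have sm: "summable (\<lambda>n. \<omega> n * cmod (tcoef B n)^2)" and nrm: "H2_norm \<omega> B = 1"
    using inner by (auto simp: H2_inner_fun_def in_H2_def)
  have X: "(\<Sum>n. \<omega> n * cmod (tcoef B n)^2) = 1" using nrm unfolding H2_norm_def by simp
  have e: "(\<lambda>n. of_real (\<omega> n) * tcoef B n * cnj (tcoef B n)) = (\<lambda>n. of_real (\<omega> n * cmod (tcoef B n)^2))"
  proof (rule ext)
    fix n
    have "tcoef B n * cnj (tcoef B n) = of_real (cmod (tcoef B n)^2)" by (rule complex_norm_square[symmetric])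
    then show "of_real (\<omega> n) * tcoef B n * cnj (tcoef B n) = of_real (\<omega> n * cmod (tcoef B n)^2)"
      by (simp only: mult.assoc of_real_mult)
  qed
  have "H2_inner \<omega> B B = of_real (\<Sum>n. \<omega> n * cmod (tcoef B n)^2)"
    unfolding H2_inner_def e by (rule suminf_of_real[OF sm, symmetric])
  then show ?thesis using X by simp
qed

lemma FbB: "H2_inner \<omega> (\<lambda>z. Ff z * b z) B = H2_inner \<omega> B B"
proof -
  have "tcoef (\<lambda>z. Ff z * b z) n = tcoef B n" for n
    by (rule tcoef_cong[OF o_R0]) (simp add: Fb)
  then show ?thesis unfolding H2_inner_def by simp
qed

lemma alpha_F: "Ff 0 * alpha = 1"
  using G_inner[OF F_in_Hb] FbB BB by simp

lemma alpha_nz: "alpha \<noteq> 0" using alpha_F by auto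

lemma kernel:
  defines "c \<equiv> cnj alpha"
  shows "is_Hb_kernel \<omega> b 0 (\<lambda>z. (1 / c) * Ff z)"
  unfolding is_Hb_kernel_def
proof (intro conjI allI impI)
  show "in_Hb \<omega> b (\<lambda>z. (1 / c) * Ff z)" by (rule Hb_scale[OF F_in_Hb])
  fix G assume G: "in_Hb \<omega> b G"
  have Gb2: "in_H2 \<omega> (\<lambda>z. G z * b z)" using G by (simp add: in_Hb_def)
  have tk: "tcoef (\<lambda>z. (1 / c) * Ff z * b z) n = (1 / c) * tcoef B n" for n
  proof -
    have "tcoef (\<lambda>z. (1 / c) * Ff z * b z) n = tcoef (\<lambda>z. (1 / c) * B z) n"
      by (rule tcoef_cong[OF o_R0]) (simp add: Fb mult.assoc)
    also have "\<dots> = (1 / c) * tcoef B n" by (rule tcoef_cmult[OF B_holo o_R0])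
    finally show ?thesis .
  qed
  have sG: "summable (\<lambda>n. of_real (\<omega> n) * tcoef (\<lambda>z. G z * b z) n * cnj (tcoef B n))"
    by (rule inner_summable) (use pos Gb2 holo_sq[OF B_holo] in \<open>auto simp: in_H2_def less_imp_le\<close>)
  have "Hb_inner \<omega> b G (\<lambda>z. (1 / c) * Ff z) =
      (\<Sum>n. cnj (1 / c) * (of_real (\<omega> n) * tcoef (\<lambda>z. G z * b z) n * cnj (tcoef B n)))"
    unfolding Hb_inner_def H2_inner_def tk by (simp add: algebra_simps)
  also have "\<dots> = cnj (1 / c) * H2_inner \<omega> (\<lambda>z. G z * b z) B"
    unfolding H2_inner_def by (rule suminf_mult[OF sG])
  also have "\<dots> = G 0" unfolding G_inner[OF G] c_def using alpha_nz by simp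
  finally show "Hb_inner \<omega> b G (\<lambda>z. (1 / c) * Ff z) = G 0" .
qed

end

theorem mainTheorem10:
  fixes \<omega> :: "nat \<Rightarrow> real" and s d0 :: nat and zs :: "nat \<Rightarrow> complex" and m :: "nat \<Rightarrow> nat"
    and p0 :: "complex poly" and f :: "nat \<Rightarrow> complex \<Rightarrow> complex"
    and b B :: "complex \<Rightarrow> complex"
  assumes "admissible_weight \<omega>"
    and "zs 0 = 0" and "\<forall>j\<le>s. zs j \<in> ball 0 1" and "inj_on zs {0..s}"
    and "\<forall>j\<in>{1..s}. m j \<ge> 1"
    and "\<forall>z. b z = z ^ d0 * (\<Prod>j\<in>{1..s}. ((z - zs j) / (1 - cnj (zs j) * z)) ^ m j)"
    and "degree p0 = d0"
    and "\<forall>j\<in>{1..s}. in_X_deg \<omega> (zs j) (f j) (m j - 1)"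
    and "\<forall>z. B z = poly p0 z + (\<Sum>j\<in>{1..s}. f j z)"
    and "H2_inner_fun \<omega> B"
  shows "\<exists>F. F holomorphic_on ball 0 1 \<and> (\<forall>z\<in>ball 0 1. b z \<noteq> 0 \<longrightarrow> F z = B z / b z) \<and>
           in_Hb \<omega> b F \<and>
           (\<exists>k c. is_Hb_kernel \<omega> b 0 k \<and> (\<forall>z\<in>ball 0 1. F z = c * k z))"
proof -
  interpret S: setting \<omega> s d0 zs m p0 f b B
    by (rule setting.intro) (rule assms)+
  show ?thesis
  proof (intro exI conjI ballI impI)
    show "S.Ff holomorphic_on ball 0 1" using S.Ff_holo S.ball1_sub by (rule holomorphic_on_subset)
    show "in_Hb \<omega> b S.Ff" by (rule S.F_in_Hb)
    show "is_Hb_kernel \<omega> b 0 (\<lambda>z. (1 / cnj S.alpha) * S.Ff z)" by (rule S.kernel)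
  next
    fix z :: complex assume z: "z \<in> ball 0 1" and bz: "b z \<noteq> 0"
    show "S.Ff z = B z / b z" using S.Fb[of z] z S.ball1_sub bz by (auto simp: field_simps)
  next
    fix z :: complex
    show "S.Ff z = cnj S.alpha * ((1 / cnj S.alpha) * S.Ff z)" using S.alpha_nz by simp
  qed
qed


end
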